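(* Let $q_1,\dots,q_5\in\widehat{\mathbb H}$ be five distinct points and let $q'_1,\dots,q'_4\in\widehat{\mathbb H}$ be four distinct points. Assume $R_{\mathbb H}(q_1,q_2,q_3,q_4)=R_{\mathbb H}(q'_1,q'_2,q'_3,q'_4)$ and $\operatorname{Im}Q(q_1,q_2,q_3,q_4)\neq0$ (equivalently, $q_1,q_2,q_3,q_4$ do not lie on a single circle or line). Then the set $$C=\{\pi(\gamma)(q_5):\gamma\in GL(2,\mathbb H),\ \pi(\gamma)(q_n)=q'_n,\ n=1,2,3,4\}\subset\widehat{\mathbb H}$$ is either a circle, a line, or a single point. Moreover, $C$ is a single point if and only if $Q(q_1,q_2,q_3,q_4)$ and $Q(q_1,q_2,q_3,q_5)$ commute.
   Context: $\mathbb H$ denotes the quaternions (identified with $\mathbb R^4$), $\operatorname{Re}q=(q+\bar q)/2$, $\operatorname{Im}q=(q-\bar q)/2$, $|q|=\sqrt{q\bar q}$; $\widehat{\mathbb H}=\mathbb H\cup\{\infty\}$. $GL(2,\mathbb H)$ acts by $\pi(\gamma)(q)=(aq+b)(cq+d)^{-1}$ for $\gamma=\begin{pmatrix}a&b\\c&d\end{pmatrix}$. The cross-ratio of four distinct points is $Q(q_1,q_2,q_3,q_4)=(q_2-q_1)^{-1}(q_4-q_1)(q_4-q_3)^{-1}(q_2-q_3)$ (limits taken if some $q_n=\infty$), and $R_{\mathbb H}(q_1,q_2,q_3,q_4)=(|Q(q_1,q_2,q_3,q_4)|,\operatorname{Re}Q(q_1,q_2,q_3,q_4))\in\mathbb R^2$.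 *)

theory Defs
  imports Complex_Main
begin

datatype quat = Quat (qRe: real) (qI: real) (qJ: real) (qK: real)

lemma quat_eqI: "qRe x = qRe y \<Longrightarrow> qI x = qI y \<Longrightarrow> qJ x = qJ y \<Longrightarrow> qK x = qK y \<Longrightarrow> x = y"
  by (cases x; cases y) auto

lemma quat_eq_iff: "x = y \<longleftrightarrow> qRe x = qRe y \<and> qI x = qI y \<and> qJ x = qJ y \<and> qK x = qK y"
  by (auto intro: quat_eqI)

instantiation quat :: ring_1
begin
definition "0 = Quat 0 0 0 0"
definition "1 = Quat 1 0 0 0"
definition "x + y = Quat (qRe x + qRe y) (qI x + qI y) (qJ x + qJ y) (qK x + qK y)"
definition "x - y = Quat (qRe x - qRe y) (qI x - qI y) (qJ x - qJ y) (qK x - qK y)"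
definition "- x = Quat (- qRe x) (- qI x) (- qJ x) (- qK x)"
definition "x * y = Quat
   (qRe x * qRe y - qI x * qI y - qJ x * qJ y - qK x * qK y)
   (qRe x * qI y + qI x * qRe y + qJ x * qK y - qK x * qJ y)
   (qRe x * qJ y - qI x * qK y + qJ x * qRe y + qK x * qI y)
   (qRe x * qK y + qI x * qJ y - qJ x * qI y + qK x * qRe y)"
instance
  by standard (auto simp: quat_eq_iff zero_quat_def one_quat_def plus_quat_def
      minus_quat_def uminus_quat_def times_quat_def algebra_simps)
end

definition qnormsq :: "quat \<Rightarrow> real" where
  "qnormsq q = (qRe q)\<^sup>2 + (qI q)\<^sup>2 + (qJ q)\<^sup>2 + (qK q)\<^sup>2"

instantiation quat :: division_ring
begin
definition "inverse x = Quat (qRe x / qnormsq x) (- qI x / qnormsq x)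
     (- qJ x / qnormsq x) (- qK x / qnormsq x)"
definition "x div (y::quat) = x * inverse y"
instance
proof
  fix a :: quat assume a: "a \<noteq> 0"
  have n: "qnormsq a \<noteq> 0"
  proof
    assume "qnormsq a = 0"
    hence "qRe a = 0 \<and> qI a = 0 \<and> qJ a = 0 \<and> qK a = 0"
      unfolding qnormsq_def by (smt (verit) power2_less_eq_zero_iff zero_le_power2)
    with a show False by (simp add: quat_eq_iff zero_quat_def)
  qed
  show "inverse a * a = 1" "a * inverse a = 1"
    using n by (simp_all add: quat_eq_iff inverse_quat_def times_quat_def one_quat_def
        field_simps; simp add: qnormsq_def power2_eq_square algebra_simps)+
next
  show "inverse (0::quat) = 0" by (simp add: inverse_quat_def zero_quat_def quat_eq_iff)
next
  fix a b :: quat show "a div b = a * inverse b" by (simp add: divide_quat_def)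
qed
end

definition qcnj :: "quat \<Rightarrow> quat" where
  "qcnj q = Quat (qRe q) (- qI q) (- qJ q) (- qK q)"

definition qabs :: "quat \<Rightarrow> real" where
  "qabs q = sqrt (qnormsq q)"

definition qof_real :: "real \<Rightarrow> quat" where
  "qof_real r = Quat r 0 0 0"

definition qIm :: "quat \<Rightarrow> quat" where
  "qIm q = (q - qcnj q) / 2"

definition qinner :: "quat \<Rightarrow> quat \<Rightarrow> real" where
  "qinner x y = qRe x * qRe y + qI x * qI y + qJ x * qJ y + qK x * qK y"

datatype hquat = Fin quat | Infty

text \<open>A quaternionic 2x2 matrix (a b; c d) is stored as the tuple (a,b,c,d).\<close>
type_synonym qmat = "quat \<times> quat \<times> quat \<times> quat"

definition qmat_mult :: "qmat \<Rightarrow> qmat \<Rightarrow> qmat" where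
  "qmat_mult M N = (case M of (a,b,c,d) \<Rightarrow> case N of (a',b',c',d') \<Rightarrow>
      (a*a' + b*c', a*b' + b*d', c*a' + d*c', c*b' + d*d'))"

definition GL2H :: "qmat set" where
  "GL2H = {M. \<exists>N. qmat_mult M N = (1,0,0,1) \<and> qmat_mult N M = (1,0,0,1)}"

definition mobius :: "qmat \<Rightarrow> hquat \<Rightarrow> hquat" where
  "mobius M z = (case M of (a,b,c,d) \<Rightarrow>
     (case z of
        Fin q \<Rightarrow> (if c*q + d = 0 then Infty else Fin ((a*q + b) * inverse (c*q + d)))
      | Infty \<Rightarrow> (if c = 0 then Infty else Fin (a * inverse c))))"

text \<open>Q(q1,q2,q3,q4) = (q2-q1)^{-1}(q4-q1)(q4-q3)^{-1}(q2-q3) for finite points; if one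
  point is infinity, the limit is taken.  For q2 = infinity the limit is taken along
  real q2.\<close>
fun crossratio :: "hquat \<Rightarrow> hquat \<Rightarrow> hquat \<Rightarrow> hquat \<Rightarrow> quat" where
  "crossratio (Fin q1) (Fin q2) (Fin q3) (Fin q4) =
     inverse (q2 - q1) * (q4 - q1) * inverse (q4 - q3) * (q2 - q3)"
| "crossratio Infty (Fin q2) (Fin q3) (Fin q4) = inverse (q4 - q3) * (q2 - q3)"
| "crossratio (Fin q1) Infty (Fin q3) (Fin q4) = (q4 - q1) * inverse (q4 - q3)"
| "crossratio (Fin q1) (Fin q2) Infty (Fin q4) = inverse (q2 - q1) * (q4 - q1)"
| "crossratio (Fin q1) (Fin q2) (Fin q3) Infty = inverse (q2 - q1) * (q2 - q3)"
| "crossratio _ _ _ _ = undefined"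

definition RH :: "hquat \<Rightarrow> hquat \<Rightarrow> hquat \<Rightarrow> hquat \<Rightarrow> real \<times> real" where
  "RH q1 q2 q3 q4 = (let Q = crossratio q1 q2 q3 q4 in (qabs Q, qRe Q))"

definition is_circle :: "hquat set \<Rightarrow> bool" where
  "is_circle S \<longleftrightarrow> (\<exists>c u v r. r > 0 \<and> qinner u u = 1 \<and> qinner v v = 1 \<and> qinner u v = 0 \<and>
      S = {Fin (c + qof_real (r * cos t) * u + qof_real (r * sin t) * v) | t. True})"

definition is_line :: "hquat set \<Rightarrow> bool" where
  "is_line S \<longleftrightarrow> (\<exists>p u. u \<noteq> 0 \<and> S = insert Infty {Fin (p + qof_real t * u) | t. True})"

end

theory Submission
  imports Defs
begin


lemma qsel_zero[simp]: "qRe 0 = 0" "qI 0 = 0" "qJ 0 = 0" "qK 0 = 0"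
  by (simp_all add: zero_quat_def)
lemma qsel_one[simp]: "qRe 1 = 1" "qI 1 = 0" "qJ 1 = 0" "qK 1 = 0"
  by (simp_all add: one_quat_def)
lemma qsel_plus[simp]: "qRe (x+y) = qRe x + qRe y" "qI (x+y) = qI x + qI y"
  "qJ (x+y) = qJ x + qJ y" "qK (x+y) = qK x + qK y"
  by (simp_all add: plus_quat_def)
lemma qsel_minus[simp]: "qRe (x-y) = qRe x - qRe y" "qI (x-y) = qI x - qI y"
  "qJ (x-y) = qJ x - qJ y" "qK (x-y) = qK x - qK y"
  by (simp_all add: minus_quat_def)
lemma qsel_uminus[simp]: "qRe (-x) = - qRe x" "qI (-x) = - qI x"
  "qJ (-x) = - qJ x" "qK (-x) = - qK x"
  by (simp_all add: uminus_quat_def)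
lemma qsel_times[simp]:
  "qRe (x * y) = qRe x * qRe y - qI x * qI y - qJ x * qJ y - qK x * qK y"
  "qI (x * y) = qRe x * qI y + qI x * qRe y + qJ x * qK y - qK x * qJ y"
  "qJ (x * y) = qRe x * qJ y - qI x * qK y + qJ x * qRe y + qK x * qI y"
  "qK (x * y) = qRe x * qK y + qI x * qJ y - qJ x * qI y + qK x * qRe y"
  by (simp_all add: times_quat_def)
lemma qsel_ofreal[simp]: "qRe (qof_real r) = r" "qI (qof_real r) = 0"
  "qJ (qof_real r) = 0" "qK (qof_real r) = 0"
  by (simp_all add: qof_real_def)
lemma qsel_cnj[simp]: "qRe (qcnj x) = qRe x" "qI (qcnj x) = - qI x"
  "qJ (qcnj x) = - qJ x" "qK (qcnj x) = - qK x"
  by (simp_all add: qcnj_def)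
lemma qsel_inverse[simp]: "qRe (inverse x) = qRe x / qnormsq x" "qI (inverse x) = - qI x / qnormsq x"
  "qJ (inverse x) = - qJ x / qnormsq x" "qK (inverse x) = - qK x / qnormsq x"
  by (simp_all add: inverse_quat_def)
lemma qsel_of_nat: "qRe (of_nat m) = of_nat m \<and> qI (of_nat m) = 0 \<and> qJ (of_nat m) = 0 \<and> qK (of_nat m) = 0"
  by (induct m) simp_all
lemma qsel_numeral[simp]: "qRe (numeral n) = numeral n" "qI (numeral n) = 0"
  "qJ (numeral n) = 0" "qK (numeral n) = 0"
  using qsel_of_nat[of "numeral n"] by (simp_all add: of_nat_numeral)

lemma qnormsq_nonneg: "qnormsq x \<ge> 0" by (simp add: qnormsq_def)
lemma qnormsq_eq0: "qnormsq x = 0 \<longleftrightarrow> x = 0"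
proof
  assume "qnormsq x = 0"
  hence "qRe x = 0 \<and> qI x = 0 \<and> qJ x = 0 \<and> qK x = 0"
    unfolding qnormsq_def by (smt (verit) power2_less_eq_zero_iff zero_le_power2)
  thus "x = 0" by (simp add: quat_eq_iff)
qed (simp add: qnormsq_def)
lemma qnormsq_pos: "x \<noteq> 0 \<Longrightarrow> qnormsq x > 0"
  using qnormsq_nonneg qnormsq_eq0 by (metis less_eq_real_def)

lemma qof_real_comm: "qof_real r * x = x * qof_real r"
  by (simp add: quat_eq_iff)
lemma qof_real_mult: "qof_real (a*b) = qof_real a * qof_real b"
  by (simp add: quat_eq_iff)
lemma qof_real_add: "qof_real (a+b) = qof_real a + qof_real b"
  by (simp add: quat_eq_iff)
lemma qof_real_0[simp]: "qof_real 0 = 0" and qof_real_1[simp]: "qof_real 1 = 1"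
  by (simp_all add: quat_eq_iff)

lemma qnormsq_mult: "qnormsq (x*y) = qnormsq x * qnormsq y"
  by (simp add: qnormsq_def power2_eq_square) algebra
lemma qinner_left: "qinner (x*y) (x*z) = qnormsq x * qinner y z"
  by (simp add: qnormsq_def qinner_def power2_eq_square) algebra
lemma qinner_right: "qinner (y*x) (z*x) = qnormsq x * qinner y z"
  by (simp add: qnormsq_def qinner_def power2_eq_square) algebra
lemma qinner_self: "qinner x x = qnormsq x"
  by (simp add: qnormsq_def qinner_def power2_eq_square)
lemma qnormsq_inverse: "qnormsq (inverse x) = inverse (qnormsq x)"
proof (cases "x = 0")
  case False
  have "qnormsq (inverse x) * qnormsq x = qnormsq (inverse x * x)" by (simp add: qnormsq_mult)
  also have "\<dots> = 1" using False by (simp add: qnormsq_def)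
  finally show ?thesis using False qnormsq_eq0 by (simp add: field_simps)
qed (simp add: qnormsq_def)


abbreviation qI2 :: qmat where "qI2 \<equiv> (1,0,0,1)"

lemma qmat_mult_simp: "qmat_mult (a,b,c,d) (a',b',c',d') = (a*a' + b*c', a*b' + b*d', c*a' + d*c', c*b' + d*d')"
  by (simp add: qmat_mult_def)

lemma qmat_mult_assoc: "qmat_mult (qmat_mult A B) C = qmat_mult A (qmat_mult B C)"
  by (cases A; cases B; cases C) (simp add: qmat_mult_simp algebra_simps)

lemma qmat_mult_id: "qmat_mult qI2 A = A" "qmat_mult A qI2 = A"
  by (cases A; simp add: qmat_mult_simp)+

lemma GL2H_mult: "M \<in> GL2H \<Longrightarrow> N \<in> GL2H \<Longrightarrow> qmat_mult M N \<in> GL2H"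
proof -
  assume "M \<in> GL2H" "N \<in> GL2H"
  then obtain M' N' where m: "qmat_mult M M' = qI2" "qmat_mult M' M = qI2"
    and n: "qmat_mult N N' = qI2" "qmat_mult N' N = qI2" unfolding GL2H_def by blast
  have "qmat_mult (qmat_mult M N) (qmat_mult N' M') = qI2"
    by (simp add: qmat_mult_assoc, simp add: qmat_mult_assoc[symmetric] n qmat_mult_id m)
  moreover have "qmat_mult (qmat_mult N' M') (qmat_mult M N) = qI2"
    by (simp add: qmat_mult_assoc, simp add: qmat_mult_assoc[symmetric] m qmat_mult_id n)
  ultimately show ?thesis unfolding GL2H_def by blast
qed

lemma GL2H_inv: "M \<in> GL2H \<Longrightarrow> \<exists>N\<in>GL2H. qmat_mult N M = qI2 \<and> qmat_mult M N = qI2"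
  unfolding GL2H_def by blast

lemma GL2H_kernel:
  assumes "(a,b,c,d) \<in> GL2H" "a*x + b*y = 0" "c*x + d*y = 0"
  shows "x = 0 \<and> y = 0"
proof -
  obtain e f g h where "qmat_mult (e,f,g,h) (a,b,c,d) = qI2"
    using assms(1) unfolding GL2H_def by auto
  hence eq: "e*a + f*c = 1" "e*b+f*d = 0" "g*a+h*c = 0" "g*b+h*d = 1" by (simp_all add: qmat_mult_simp)
  have "x = (e*a + f*c)*x + (e*b+f*d)*y" using eq by simp
  also have "\<dots> = e*(a*x+b*y) + f*(c*x+d*y)" by (simp add: algebra_simps)
  finally have "x = 0" using assms by simp
  have "y = (g*a + h*c)*x + (g*b+h*d)*y" using eq by simp
  also have "\<dots> = g*(a*x+b*y) + h*(c*x+d*y)" by (simp add: algebra_simps)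
  finally have "y = 0" using assms by simp
  with \<open>x = 0\<close> show ?thesis by simp
qed

lemma mobius_comp:
  assumes N: "N \<in> GL2H"
  shows "mobius (qmat_mult M N) z = mobius M (mobius N z)"
proof -
  obtain a b c d where M: "M = (a,b,c,d)" by (cases M) auto
  obtain a' b' c' d' where Nd: "N = (a',b',c',d')" by (cases N) auto
  have N': "(a',b',c',d') \<in> GL2H" using N Nd by simp
  show ?thesis
  proof (cases z)
    case (Fin q)
    show ?thesis
    proof (cases "c'*q + d' = 0")
      case True
      have u: "a'*q + b' \<noteq> 0" using GL2H_kernel[OF N', of q 1] True by auto
      have e1: "(c*a' + d*c')*q + (c*b' + d*d') = c*(a'*q+b') + d*(c'*q+d')" by (simp add: algebra_simps)
      have e2: "(a*a' + b*c')*q + (a*b' + b*d') = a*(a'*q+b') + b*(c'*q+d')" by (simp add: algebra_simps)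
      have e3: "(a'*q+b') * (inverse (a'*q+b') * inverse c) = inverse c" using u by (simp add: mult.assoc[symmetric])
      show ?thesis using True u
        by (simp add: M Nd Fin mobius_def qmat_mult_simp e1 e2 e3 nonzero_inverse_mult_distrib mult.assoc)
    next
      case False
      define s where "s = c'*q + d'"
      define w where "w = (a'*q+b') * inverse s"
      have ws: "a'*q + b' = w * s" using False by (simp add: w_def s_def mult.assoc)
      have e1: "(c*a' + d*c')*q + (c*b' + d*d') = (c*w + d) * s"
      proof -
        have "(c*a' + d*c')*q + (c*b' + d*d') = c*(a'*q+b') + d*s" by (simp add: algebra_simps s_def)
        also have "\<dots> = (c*w + d) * s" unfolding ws by (simp add: algebra_simps)
        finally show ?thesis .
      qed
      have e2: "(a*a' + b*c')*q + (a*b' + b*d') = (a*w + b) * s"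
      proof -
        have "(a*a' + b*c')*q + (a*b' + b*d') = a*(a'*q+b') + b*s" by (simp add: algebra_simps s_def)
        also have "\<dots> = (a*w + b) * s" unfolding ws by (simp add: algebra_simps)
        finally show ?thesis .
      qed
      have s0: "s \<noteq> 0" using False s_def by simp
      have e3: "s * (inverse s * x) = x" for x using s0 by (simp add: mult.assoc[symmetric])
      show ?thesis using False s0 e3
        by (simp add: M Nd Fin mobius_def qmat_mult_simp e1 e2 nonzero_inverse_mult_distrib mult.assoc
            w_def[symmetric] s_def[symmetric])
    qed
  next
    case Infty
    show ?thesis
    proof (cases "c' = 0")
      case True
      have u: "a' \<noteq> 0" using GL2H_kernel[OF N', of 1 0] True by auto
      have e3: "a' * (inverse a' * x) = x" for x using u by (simp add: mult.assoc[symmetric])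
      show ?thesis using True u e3
        by (simp add: M Nd Infty mobius_def qmat_mult_simp nonzero_inverse_mult_distrib mult.assoc)
    next
      case False
      define w where "w = a' * inverse c'"
      have ws: "a' = w * c'" using False by (simp add: w_def mult.assoc)
      have e1: "c*a' + d*c' = (c*w + d) * c'" by (subst ws) (simp add: algebra_simps)
      have e2: "a*a' + b*c' = (a*w + b) * c'" by (subst ws) (simp add: algebra_simps)
      have e3: "c' * (inverse c' * x) = x" for x using False by (simp add: mult.assoc[symmetric])
      show ?thesis using False e3
        by (simp add: M Nd Infty mobius_def qmat_mult_simp e1 e2 nonzero_inverse_mult_distrib mult.assoc
            w_def[symmetric])
    qed
  qed
qed

lemma mobius_id: "mobius qI2 z = z"
  by (cases z) (simp_all add: mobius_def)

lemma mobius_inv: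
  assumes "M \<in> GL2H"
  obtains N where "N \<in> GL2H" "\<And>z. mobius N (mobius M z) = z" "\<And>z. mobius M (mobius N z) = z"
proof -
  obtain N where N: "N \<in> GL2H" "qmat_mult N M = qI2" "qmat_mult M N = qI2" using GL2H_inv[OF assms] by blast
  show ?thesis
  proof (rule that[OF N(1)])
    fix z show "mobius N (mobius M z) = z" using mobius_comp[OF assms, of N z] N mobius_id by simp
    show "mobius M (mobius N z) = z" using mobius_comp[OF N(1), of M z] N mobius_id by simp
  qed
qed

lemma mobius_inj: "M \<in> GL2H \<Longrightarrow> mobius M z = mobius M w \<Longrightarrow> z = w"
  by (metis mobius_inv[of M])

lemma GL2H_upper:
  assumes "a \<noteq> 0" "d \<noteq> 0" shows "(a,b,0,d) \<in> GL2H"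
proof -
  have "qmat_mult (a,b,0,d) (inverse a, - inverse a * b * inverse d, 0, inverse d) = qI2"
    using assms by (simp add: qmat_mult_simp mult.assoc[symmetric])
  moreover have "qmat_mult (inverse a, - inverse a * b * inverse d, 0, inverse d) (a,b,0,d) = qI2"
    using assms by (simp add: qmat_mult_simp mult.assoc)
  ultimately show ?thesis unfolding GL2H_def by blast
qed

lemma GL2H_lower:
  assumes "a \<noteq> 0" "d \<noteq> 0" shows "(a,0,c,d) \<in> GL2H"
proof -
  have "qmat_mult (a,0,c,d) (inverse a, 0, - inverse d * c * inverse a, inverse d) = qI2"
    using assms by (simp add: qmat_mult_simp mult.assoc[symmetric])
  moreover have "qmat_mult (inverse a, 0, - inverse d * c * inverse a, inverse d) (a,0,c,d) = qI2"
    using assms by (simp add: qmat_mult_simp mult.assoc)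
  ultimately show ?thesis unfolding GL2H_def by blast
qed

lemma GL2H_swap: "(0,1,1,0) \<in> GL2H"
  unfolding GL2H_def mem_Collect_eq by (rule exI[of _ "(0,1,1,0)"]) (simp add: qmat_mult_simp)

lemma GL2H_gen:
  assumes "c \<noteq> 0" "b - a * inverse c * d \<noteq> 0" shows "(a,b,c,d) \<in> GL2H"
proof -
  have "(a,b,c,d) = qmat_mult (1, a * inverse c, 0, 1) (qmat_mult (b - a * inverse c * d, 0, d, c) (0,1,1,0))"
    using assms by (simp add: qmat_mult_simp mult.assoc)
  moreover have "(1, a * inverse c, 0, 1) \<in> GL2H" by (rule GL2H_upper) simp_all
  moreover have "(b - a * inverse c * d, 0, d, c) \<in> GL2H" by (rule GL2H_lower) (use assms in simp_all)
  ultimately show ?thesis using GL2H_mult GL2H_swap by metis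
qed

lemma GL2H_props:
  assumes "(a,b,c,d) \<in> GL2H"
  shows "c = 0 \<Longrightarrow> a \<noteq> 0 \<and> d \<noteq> 0" and "c \<noteq> 0 \<Longrightarrow> b - a * inverse c * d \<noteq> 0"
proof -
  assume c: "c = 0"
  have "a \<noteq> 0" using GL2H_kernel[OF assms, of 1 0] c by auto
  moreover have "d \<noteq> 0"
  proof
    assume d: "d = 0"
    obtain N where "qmat_mult (a,b,c,d) N = qI2" using assms unfolding GL2H_def by auto
    thus False using c d by (cases N) (simp add: qmat_mult_simp)
  qed
  ultimately show "a \<noteq> 0 \<and> d \<noteq> 0" by simp
next
  assume c: "c \<noteq> 0"
  show "b - a * inverse c * d \<noteq> 0"
  proof
    assume k: "b - a * inverse c * d = 0"
    have "a * (- (inverse c * d)) + b * 1 = 0" using k by (simp add: algebra_simps mult.assoc)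
    moreover have "c * (- (inverse c * d)) + d * 1 = 0" using c by (simp add: mult.assoc[symmetric])
    ultimately show False using GL2H_kernel[OF assms] by fastforce
  qed
qed


lemma stab_form:
  assumes "M \<in> GL2H" "mobius M (Fin 0) = Fin 0" "mobius M (Fin 1) = Fin 1" "mobius M Infty = Infty"
  shows "\<exists>a. a \<noteq> 0 \<and> M = (a,0,0,a)"
proof -
  obtain a b c d where M: "M = (a,b,c,d)" by (cases M) auto
  have c: "c = 0" using assms(4) by (simp add: M mobius_def split: if_splits)
  have ad: "a \<noteq> 0" "d \<noteq> 0" using GL2H_props(1)[of a b c d] assms(1) M c by auto
  have "b * inverse d = 0" using assms(2) ad by (simp add: M mobius_def c)
  hence b: "b = 0" using ad by simp
  have "a * inverse d = 1" using assms(3) ad by (simp add: M mobius_def c b)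
  hence "a = d" using ad by (metis mult.assoc mult_1_left left_inverse mult_1_right)
  thus ?thesis using M b c ad by auto
qed

lemma scal_GL2H: "a \<noteq> 0 \<Longrightarrow> (a,0,0,a) \<in> GL2H"
  by (rule GL2H_upper)

lemma scal_mobius: "a \<noteq> 0 \<Longrightarrow> mobius (a,0,0,a) (Fin q) = Fin (a*q*inverse a)"
  "mobius (a,0,0,a) Infty = Infty"
  by (simp_all add: mobius_def)

lemma inv_prod_cancel: "(x::quat) \<noteq> 0 \<Longrightarrow> x * (inverse x * y) = y" "x \<noteq> 0 \<Longrightarrow> inverse x * (x * y) = y"
  by (simp_all add: mult.assoc[symmetric])

lemma normalize:
  assumes "z1 \<noteq> z2" "z1 \<noteq> z3" "z2 \<noteq> z3"
  shows "\<exists>N\<in>GL2H. mobius N z1 = Fin 0 \<and> mobius N z2 = Fin 1 \<and> mobius N z3 = Infty \<and>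
     (\<forall>z. z \<noteq> z1 \<and> z \<noteq> z2 \<and> z \<noteq> z3 \<longrightarrow> mobius N z = Fin (crossratio z1 z2 z3 z))"
proof (cases z1)
  case (Fin x1) note z1 = this
  show ?thesis
  proof (cases z2)
    case (Fin x2) note z2 = this
    show ?thesis
    proof (cases z3)
      case (Fin x3) note z3 = this
      define \<alpha> where "\<alpha> = x2 - x1"
      define \<beta> where "\<beta> = x2 - x3"
      have ne: "\<alpha> \<noteq> 0" "\<beta> \<noteq> 0" "x3 - x1 \<noteq> 0" using assms z1 z2 z3 by (auto simp: \<alpha>_def \<beta>_def)
      define N where "N = (inverse \<alpha>, - inverse \<alpha> * x1, inverse \<beta>, - inverse \<beta> * x3)"
      have k: "- inverse \<alpha> * x1 - inverse \<alpha> * inverse (inverse \<beta>) * (- inverse \<beta> * x3) = inverse \<alpha> * (x3 - x1)"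
        using ne by (simp add: algebra_simps inv_prod_cancel)
      have NG: "N \<in> GL2H" unfolding N_def
        by (rule GL2H_gen) (use ne k in simp_all)
      have den: "inverse \<beta> * q - inverse \<beta> * x3 = inverse \<beta> * (q - x3)" for q by (simp add: algebra_simps)
      have num: "inverse \<alpha> * q - inverse \<alpha> * x1 = inverse \<alpha> * (q - x1)" for q by (simp add: algebra_simps)
      have fin: "mobius N (Fin q) = Fin (inverse \<alpha> * (q - x1) * inverse (q - x3) * \<beta>)" if "q \<noteq> x3" for q
        using that ne by (simp add: N_def mobius_def den num nonzero_inverse_mult_distrib mult.assoc)
      show ?thesis
      proof (intro bexI[OF _ NG] conjI allI impI)
        show "mobius N z1 = Fin 0" using fin[of x1] z1 ne by auto
        show "mobius N z2 = Fin 1" using fin[of x2] z2 z3 assms ne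
          by (simp add: \<alpha>_def[symmetric] \<beta>_def[symmetric] mult.assoc inv_prod_cancel)
        show "mobius N z3 = Infty" using z3 ne by (simp add: N_def mobius_def den)
        fix z assume "z \<noteq> z1 \<and> z \<noteq> z2 \<and> z \<noteq> z3"
        then show "mobius N z = Fin (crossratio z1 z2 z3 z)"
          using fin z1 z2 z3 ne
          by (cases z) (auto simp: \<alpha>_def \<beta>_def N_def mobius_def mult.assoc)
      qed
    next
      case Infty note z3 = this
      define \<alpha> where "\<alpha> = x2 - x1"
      have ne: "\<alpha> \<noteq> 0" using assms z1 z2 by (auto simp: \<alpha>_def)
      define N where "N = (inverse \<alpha>, - inverse \<alpha> * x1, 0::quat, 1::quat)"
      have NG: "N \<in> GL2H" unfolding N_def by (rule GL2H_upper) (use ne in simp_all)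
      have num: "inverse \<alpha> * q - inverse \<alpha> * x1 = inverse \<alpha> * (q - x1)" for q by (simp add: algebra_simps)
      have fin: "mobius N (Fin q) = Fin (inverse \<alpha> * (q - x1))" for q
        by (simp add: N_def mobius_def num)
      show ?thesis
      proof (intro bexI[OF _ NG] conjI allI impI)
        show "mobius N z1 = Fin 0" using fin[of x1] z1 by auto
        show "mobius N z2 = Fin 1" using fin[of x2] z2 ne by (simp add: \<alpha>_def[symmetric])
        show "mobius N z3 = Infty" using z3 by (simp add: N_def mobius_def)
        fix z assume "z \<noteq> z1 \<and> z \<noteq> z2 \<and> z \<noteq> z3"
        then show "mobius N z = Fin (crossratio z1 z2 z3 z)"
          using fin z1 z2 z3 by (cases z) (auto simp: \<alpha>_def)
      qed
    qed
  next
    case Infty note z2 = this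
    then obtain x3 where z3: "z3 = Fin x3" using assms by (cases z3) auto
    have ne: "x3 - x1 \<noteq> 0" using assms z1 z3 by auto
    define N where "N = (1::quat, - x1, 1::quat, - x3)"
    have NG: "N \<in> GL2H" unfolding N_def by (rule GL2H_gen) (use ne in simp_all)
    have fin: "mobius N (Fin q) = Fin ((q - x1) * inverse (q - x3))" if "q \<noteq> x3" for q
      using that by (simp add: N_def mobius_def)
    show ?thesis
    proof (intro bexI[OF _ NG] conjI allI impI)
      show "mobius N z1 = Fin 0" using fin[of x1] z1 ne by auto
      show "mobius N z2 = Fin 1" using z2 by (simp add: N_def mobius_def)
      show "mobius N z3 = Infty" using z3 by (simp add: N_def mobius_def)
      fix z assume "z \<noteq> z1 \<and> z \<noteq> z2 \<and> z \<noteq> z3"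
      then show "mobius N z = Fin (crossratio z1 z2 z3 z)"
        using fin z1 z2 z3 by (cases z) auto
    qed
  qed
next
  case Infty note z1 = this
  then obtain x2 x3 where z2: "z2 = Fin x2" and z3: "z3 = Fin x3" using assms by (cases z2; cases z3) auto
  define \<beta> where "\<beta> = x2 - x3"
  have ne: "\<beta> \<noteq> 0" using assms z2 z3 by (auto simp: \<beta>_def)
  define N where "N = (0::quat, 1::quat, inverse \<beta>, - inverse \<beta> * x3)"
  have NG: "N \<in> GL2H" unfolding N_def by (rule GL2H_gen) (use ne in simp_all)
  have den: "inverse \<beta> * q - inverse \<beta> * x3 = inverse \<beta> * (q - x3)" for q by (simp add: algebra_simps)
  have fin: "mobius N (Fin q) = Fin (inverse (q - x3) * \<beta>)" if "q \<noteq> x3" for q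
    using that ne by (simp add: N_def mobius_def den nonzero_inverse_mult_distrib)
  show ?thesis
  proof (intro bexI[OF _ NG] conjI allI impI)
    show "mobius N z1 = Fin 0" using z1 ne by (simp add: N_def mobius_def)
    show "mobius N z2 = Fin 1" using fin[of x2] z2 z3 assms ne by (simp add: \<beta>_def[symmetric])
    show "mobius N z3 = Infty" using z3 ne by (simp add: N_def mobius_def den)
    fix z assume "z \<noteq> z1 \<and> z \<noteq> z2 \<and> z \<noteq> z3"
    then show "mobius N z = Fin (crossratio z1 z2 z3 z)"
      using fin z1 z2 z3 ne by (cases z) (auto simp: \<beta>_def)
  qed
qed


definition uimag :: "quat \<Rightarrow> bool" where
  "uimag I \<longleftrightarrow> qRe I = 0 \<and> qnormsq I = 1"

lemma uimag_sq: assumes "uimag I" shows "I * I = -1"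
proof -
  have h: "qRe I = 0" "qI I * qI I + qJ I * qJ I + qK I * qK I = 1"
    using assms unfolding uimag_def qnormsq_def by (auto simp add: power2_eq_square)
  show ?thesis using h by (simp add: quat_eq_iff)
qed

lemma two_nz: "(2::quat) \<noteq> 0" by (simp add: quat_eq_iff)
lemma qIm_eq: "qIm q = Quat 0 (qI q) (qJ q) (qK q)"
proof -
  have "q - qcnj q = Quat 0 (qI q) (qJ q) (qK q) * 2" by (simp add: quat_eq_iff)
  hence "qIm q = (Quat 0 (qI q) (qJ q) (qK q) * 2) / 2" unfolding qIm_def by simp
  also have "\<dots> = Quat 0 (qI q) (qJ q) (qK q)" by (simp only: divide_inverse mult.assoc right_inverse[OF two_nz] mult_1_right)
  finally show ?thesis .
qed
lemma qIm_nz: "qIm q \<noteq> 0 \<longleftrightarrow> (qI q \<noteq> 0 \<or> qJ q \<noteq> 0 \<or> qK q \<noteq> 0)"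
  by (auto simp: qIm_eq quat_eq_iff)

lemma pure_sq: "qRe w = 0 \<Longrightarrow> w * w = qof_real (- qnormsq w)"
  by (simp add: quat_eq_iff qnormsq_def power2_eq_square)

lemma similar_exists:
  assumes re: "qRe P = qRe P'" and n: "qnormsq P = qnormsq P'"
    and im: "qI P \<noteq> 0 \<or> qJ P \<noteq> 0 \<or> qK P \<noteq> 0"
  shows "\<exists>b. b \<noteq> 0 \<and> b * P = P' * b"
proof -
  have n2: "qI P ^ 2 + qJ P ^ 2 + qK P ^ 2 = qI P' ^ 2 + qJ P' ^ 2 + qK P' ^ 2"
    using n re unfolding qnormsq_def by simp
  show ?thesis
  proof (cases "qI P' = - qI P \<and> qJ P' = - qJ P \<and> qK P' = - qK P")
    case False
    define r where "r = qof_real (qRe P)"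
    define v where "v = P - r"
    define v' where "v' = P' - r"
    have P: "P = r + v" and P': "P' = r + v'" by (simp_all add: v_def v'_def)
    have vv: "v * v = v' * v'" using pure_sq[of v] pure_sq[of v'] n2 re
      by (simp add: v_def v'_def r_def qnormsq_def)
    have rc: "r * x = x * r" for x unfolding r_def by (rule qof_real_comm)
    define b where "b = v + v'"
    have "b \<noteq> 0" using False re by (auto simp: b_def v_def v'_def r_def quat_eq_iff)
    moreover have "b * P = P' * b"
      unfolding P P' b_def by (simp add: algebra_simps vv rc)
    ultimately show ?thesis by blast
  next
    case True
    show ?thesis
    proof (cases "qI P = 0 \<and> qJ P = 0")
      case True2: True
      define b where "b = Quat 0 1 0 0"
      have "b \<noteq> 0" by (simp add: b_def quat_eq_iff)
      moreover have "b * P = P' * b" using True True2 re by (simp add: b_def quat_eq_iff)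
      ultimately show ?thesis by blast
    next
      case False2: False
      define b where "b = Quat 0 (- qJ P) (qI P) 0"
      have "b \<noteq> 0" using False2 by (auto simp: b_def quat_eq_iff)
      moreover have "b * P = P' * b" using True re by (simp add: b_def quat_eq_iff algebra_simps)
      ultimately show ?thesis by blast
    qed
  qed
qed

lemma centralizer:
  assumes c: "a * P = P * a" and im: "qI P \<noteq> 0 \<or> qJ P \<noteq> 0 \<or> qK P \<noteq> 0"
  shows "\<exists>x y. a = qof_real x + qof_real y * P"
proof -
  define n where "n = qI P ^ 2 + qJ P ^ 2 + qK P ^ 2"
  have npos: "n > 0" using im unfolding n_def by (auto simp: add_pos_nonneg add_nonneg_pos)
  define S where "S = qI a * qI P + qJ a * qJ P + qK a * qK P"
  define y where "y = S / n"
  define x where "x = qRe a - y * qRe P"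
  have c1: "qJ a * qK P = qK a * qJ P" and c2: "qK a * qI P = qI a * qK P" and c3: "qI a * qJ P = qJ a * qI P"
    using c by (simp_all add: quat_eq_iff) (simp_all add: algebra_simps)
  have "n * qI a - S * qI P = qJ P * (qI a * qJ P - qJ a * qI P) + qK P * (qI a * qK P - qK a * qI P)"
    unfolding n_def S_def by (simp add: power2_eq_square algebra_simps)
  hence e1: "n * qI a = S * qI P" using c2 c3 by simp
  have "n * qJ a - S * qJ P = qI P * (qJ a * qI P - qI a * qJ P) + qK P * (qJ a * qK P - qK a * qJ P)"
    unfolding n_def S_def by (simp add: power2_eq_square algebra_simps)
  hence e2: "n * qJ a = S * qJ P" using c1 c3 by simp
  have "n * qK a - S * qK P = qI P * (qK a * qI P - qI a * qK P) + qJ P * (qK a * qJ P - qJ a * qK P)"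
    unfolding n_def S_def by (simp add: power2_eq_square algebra_simps)
  hence e3: "n * qK a = S * qK P" using c1 c2 by simp
  have yI: "y * qI P = qI a" using e1 npos unfolding y_def by (simp add: field_simps)
  have yJ: "y * qJ P = qJ a" using e2 npos unfolding y_def by (simp add: field_simps)
  have yK: "y * qK P = qK a" using e3 npos unfolding y_def by (simp add: field_simps)
  have "a = qof_real x + qof_real y * P"
    using yI yJ yK by (simp add: quat_eq_iff x_def)
  thus ?thesis by blast
qed


lemma qr_mult1: "qof_real a * qof_real b = qof_real (a*b)" by (simp add: quat_eq_iff)
lemma qr_mult2: "qof_real a * (qof_real b * x) = qof_real (a*b) * x" by (simp add: quat_eq_iff algebra_simps)
lemma qr_mult3: "(qof_real a * x) * qof_real b = qof_real (a*b) * x" by (simp add: quat_eq_iff algebra_simps)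
lemma qr_mult4: "(qof_real a * x) * (qof_real b * y) = qof_real (a*b) * (x*y)" by (simp add: quat_eq_iff algebra_simps)
lemma qr_add: "qof_real a * x + qof_real b * x = qof_real (a+b) * x" by (simp add: quat_eq_iff algebra_simps)
lemma qr_left: "A * (qof_real a * x) = qof_real a * (A * x)" by (simp add: quat_eq_iff algebra_simps)
lemma qr_right: "(qof_real a * x) * B = qof_real a * (x * B)" by (simp add: quat_eq_iff algebra_simps)
lemma qr_inner: "qinner (qof_real a * x) (qof_real b * y) = a * b * qinner x y" by (simp add: qinner_def algebra_simps)

definition affh :: "quat \<Rightarrow> quat \<Rightarrow> quat \<Rightarrow> hquat \<Rightarrow> hquat" where
  "affh A B C z = (case z of Fin x \<Rightarrow> Fin (A*x*B + C) | Infty \<Rightarrow> Infty)"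

lemma mobius_upper: "d \<noteq> 0 \<Longrightarrow> mobius (a,b,0,d) z = affh a (inverse d) (b * inverse d) z"
  by (cases z) (simp_all add: mobius_def affh_def algebra_simps)

lemma circle_alt:
  assumes r: "r > 0"
  shows "{Fin (c + qof_real (r * cos t) * u + qof_real (r * sin t) * v) | t. True} =
         {Fin (c + qof_real \<alpha> * u + qof_real \<beta> * v) | \<alpha> \<beta>. \<alpha>^2 + \<beta>^2 = r^2}"
proof
  show "{Fin (c + qof_real (r * cos t) * u + qof_real (r * sin t) * v) | t. True} \<subseteq>
         {Fin (c + qof_real \<alpha> * u + qof_real \<beta> * v) | \<alpha> \<beta>. \<alpha>^2 + \<beta>^2 = r^2}"
  proof safe
    fix t
    have "(r * cos t)^2 + (r * sin t)^2 = r^2 * ((sin t)^2 + (cos t)^2)" by (simp only: power_mult_distrib distrib_left add.commute)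
    hence "(r * cos t)^2 + (r * sin t)^2 = r^2" by simp
    thus "\<exists>\<alpha> \<beta>. Fin (c + qof_real (r * cos t) * u + qof_real (r * sin t) * v) = Fin (c + qof_real \<alpha> * u + qof_real \<beta> * v) \<and> \<alpha>^2 + \<beta>^2 = r^2"
      by blast
  qed
next
  show "{Fin (c + qof_real \<alpha> * u + qof_real \<beta> * v) | \<alpha> \<beta>. \<alpha>^2 + \<beta>^2 = r^2} \<subseteq>
       {Fin (c + qof_real (r * cos t) * u + qof_real (r * sin t) * v) | t. True}"
  proof safe
    fix \<alpha> \<beta> :: real assume h: "\<alpha>^2 + \<beta>^2 = r^2"
    have "(\<alpha>/r)^2 + (\<beta>/r)^2 = 1" using h r by (simp add: power_divide field_simps)
    then obtain t where t: "\<alpha>/r = cos t" "\<beta>/r = sin t" by (rule sincos_total_2pi)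
    hence "\<alpha> = r * cos t" "\<beta> = r * sin t" using r by (simp_all add: field_simps)
    thus "\<exists>t. Fin (c + qof_real \<alpha> * u + qof_real \<beta> * v) = Fin (c + qof_real (r * cos t) * u + qof_real (r * sin t) * v) \<and> True"
      by blast
  qed
qed

lemma is_circle_alt:
  assumes "r > 0" "qinner u u = 1" "qinner v v = 1" "qinner u v = 0"
    "S = {Fin (c + qof_real \<alpha> * u + qof_real \<beta> * v) | \<alpha> \<beta>. \<alpha>^2 + \<beta>^2 = r^2}"
  shows "is_circle S"
  unfolding is_circle_def
  by (rule exI[of _ c], rule exI[of _ u], rule exI[of _ v], rule exI[of _ r])
     (use assms circle_alt[OF assms(1), of c u v] in simp)

lemma image_setbuilder: "g ` {f t | t. P t} = {g (f t) | t. P t}" by blast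

lemma sqrt_sq_inv: "k > 0 \<Longrightarrow> (1 / sqrt k)^2 * k = 1"
  by (simp add: power_divide)

lemma circle_affine:
  assumes S: "is_circle S" and A: "A \<noteq> 0" and B: "B \<noteq> 0"
  shows "is_circle (affh A B C ` S)"
proof -
  obtain c u v r where r: "r > 0" and uv: "qinner u u = 1" "qinner v v = 1" "qinner u v = 0"
    and Sd: "S = {Fin (c + qof_real (r * cos t) * u + qof_real (r * sin t) * v) | t. True}"
    using S unfolding is_circle_def by blast
  define k where "k = sqrt (qnormsq A * qnormsq B)"
  have kpos: "k > 0" unfolding k_def using A B qnormsq_pos by simp
  have k2: "k^2 = qnormsq A * qnormsq B" unfolding k_def
    using qnormsq_nonneg[of A] qnormsq_nonneg[of B] by simp
  define u' where "u' = qof_real (1/k) * (A*u*B)"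
  define v' where "v' = qof_real (1/k) * (A*v*B)"
  have inn: "qinner (A*x*B) (A*y*B) = k^2 * qinner x y" for x y
    by (simp add: qinner_right qinner_left k2)
  have uv': "qinner u' u' = 1" "qinner v' v' = 1" "qinner u' v' = 0"
    unfolding u'_def v'_def qr_inner inn using uv kpos by (simp_all add: power2_eq_square)
  have eq: "affh A B C ` S = {Fin ((A*c*B + C) + qof_real ((r*k) * cos t) * u' + qof_real ((r*k) * sin t) * v') | t. True}"
  proof -
    have sw: "A * (qof_real s * x) * B = qof_real s * (A*x*B)" for s x by (simp only: qr_left qr_right)
    have sc: "qof_real (r * f) * X = qof_real ((r*k) * f) * (qof_real (1/k) * X)" for f X
      using kpos by (simp only: qr_mult2) simp
    have pt: "A * (c + qof_real (r * cos t) * u + qof_real (r * sin t) * v) * B + C =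
       (A*c*B + C) + qof_real ((r*k) * cos t) * u' + qof_real ((r*k) * sin t) * v'" for t
    proof -
      have "A * (c + qof_real (r * cos t) * u + qof_real (r * sin t) * v) * B + C =
        (A*c*B + C) + A * (qof_real (r * cos t) * u) * B + A * (qof_real (r * sin t) * v) * B"
        by (simp add: distrib_left distrib_right)
      also have "\<dots> = (A*c*B + C) + qof_real (r * cos t) * (A*u*B) + qof_real (r * sin t) * (A*v*B)"
        by (simp only: sw)
      also have "\<dots> = (A*c*B + C) + qof_real ((r*k) * cos t) * u' + qof_real ((r*k) * sin t) * v'"
        unfolding u'_def v'_def by (simp only: sc)
      finally show ?thesis .
    qed
    show ?thesis unfolding Sd image_setbuilder by (simp add: affh_def pt)
  qed
  show ?thesis unfolding is_circle_def eq using uv' r kpos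
    by (intro exI[of _ "A*c*B + C"] exI[of _ u'] exI[of _ v'] exI[of _ "r*k"]) simp
qed

lemma line_affine:
  assumes S: "is_line S" and A: "A \<noteq> 0" and B: "B \<noteq> 0"
  shows "is_line (affh A B C ` S)"
proof -
  obtain p u where u: "u \<noteq> 0" and Sd: "S = insert Infty {Fin (p + qof_real t * u) | t. True}"
    using S unfolding is_line_def by blast
  have sw: "A * (qof_real s * x) * B = qof_real s * (A*x*B)" for s x by (simp only: qr_left qr_right)
  have pt: "A * (p + qof_real t * u) * B + C = (A*p*B + C) + qof_real t * (A*u*B)" for t
    by (simp add: distrib_left distrib_right sw)
  have eq: "affh A B C ` S = insert Infty {Fin ((A*p*B + C) + qof_real t * (A*u*B)) | t. True}"
    unfolding Sd image_insert image_setbuilder by (simp add: affh_def pt)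
  have "A*u*B \<noteq> 0" using A B u by simp
  thus ?thesis unfolding is_line_def eq by blast
qed

lemma gen_affine:
  assumes "is_circle S \<or> is_line S" "A \<noteq> 0" "B \<noteq> 0"
  shows "is_circle (affh A B C ` S) \<or> is_line (affh A B C ` S)"
  using assms circle_affine line_affine by blast

definition cp :: "quat \<Rightarrow> real \<Rightarrow> quat" where
  "cp I t = qof_real (cos t) + qof_real (sin t) * I"

definition circ :: "quat \<Rightarrow> hquat set" where
  "circ I = {Fin (cp I t) | t. True}"

lemma circ_circle: "uimag I \<Longrightarrow> is_circle (circ I)"
  unfolding is_circle_def circ_def cp_def
  by (rule exI[of _ 0], rule exI[of _ 1], rule exI[of _ I], rule exI[of _ 1])
     (auto simp add: uimag_def qinner_self qinner_def qnormsq_def)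

lemma cp_rot:
  assumes "uimag I"
  shows "(qof_real (cos p) + qof_real (sin p) * I) * cp I t = cp I (t + p)"
proof -
  have "(qof_real (cos p) + qof_real (sin p) * I) * cp I t =
     qof_real (cos p * cos t) + qof_real (cos p * sin t) * I + qof_real (sin p * cos t) * I + qof_real (sin p * sin t) * (I * I)"
    unfolding cp_def by (simp add: distrib_left distrib_right qr_mult1 qr_mult2 qr_mult3 qr_mult4 add.assoc)
  also have "\<dots> = qof_real (cos p * cos t - sin p * sin t) + qof_real (cos p * sin t + sin p * cos t) * I"
    unfolding uimag_sq[OF assms] by (simp add: quat_eq_iff algebra_simps)
  also have "\<dots> = cp I (t + p)" unfolding cp_def by (simp add: cos_add sin_add algebra_simps)
  finally show ?thesis .
qed


definition V :: "quat \<Rightarrow> quat \<Rightarrow> real \<Rightarrow> real \<Rightarrow> real \<Rightarrow> quat" where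
  "V I H a b c = qof_real a + qof_real b * I + qof_real c * H"

definition frame :: "quat \<Rightarrow> quat \<Rightarrow> bool" where
  "frame I H \<longleftrightarrow> uimag I \<and> qRe H = 0 \<and> qinner I H = 0"

lemma frame_facts:
  assumes "frame I H"
  shows "qRe I = 0" "qRe H = 0" "qI I * qI I + qJ I * qJ I + qK I * qK I = 1"
    "qI I * qI H + qJ I * qJ H + qK I * qK H = 0"
    "qnormsq H = qI H * qI H + qJ H * qJ H + qK H * qK H"
  using assms unfolding frame_def uimag_def qnormsq_def qinner_def
  by (auto simp: power2_eq_square)

lemma V_norm:
  assumes "frame I H"
  shows "qnormsq (V I H a b c) = a^2 + b^2 + c^2 * qnormsq H"
proof -
  note h = frame_facts[OF assms]
  have "qnormsq (V I H a b c) = a^2 + b^2 * (qI I * qI I + qJ I * qJ I + qK I * qK I)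
      + 2*b*c*(qI I * qI H + qJ I * qJ H + qK I * qK H) + c^2 * (qI H * qI H + qJ H * qJ H + qK H * qK H)"
    by (simp add: V_def qnormsq_def h(1,2) power2_eq_square algebra_simps)
  also have "\<dots> = a^2 + b^2 + c^2 * qnormsq H" by (simp only: h(3,4) h(5)[symmetric], simp?)
  finally show ?thesis .
qed

lemma V_inner:
  assumes "frame I H"
  shows "qinner (V I H a b c) (V I H a' b' c') = a*a' + b*b' + c*c' * qnormsq H"
proof -
  note h = frame_facts[OF assms]
  have "qinner (V I H a b c) (V I H a' b' c') = a*a' + b*b' * (qI I * qI I + qJ I * qJ I + qK I * qK I)
      + (b*c' + c*b')*(qI I * qI H + qJ I * qJ H + qK I * qK H) + c*c' * (qI H * qI H + qJ H * qJ H + qK H * qK H)"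
    by (simp add: V_def qinner_def h(1,2) algebra_simps)
  also have "\<dots> = a*a' + b*b' + c*c' * qnormsq H" by (simp only: h(3,4) h(5)[symmetric], simp?)
  finally show ?thesis .
qed

lemma V_inv:
  assumes "frame I H" and F: "a^2 + b^2 + c^2 * qnormsq H \<noteq> 0"
  shows "inverse (V I H a b c) = V I H (a / (a^2 + b^2 + c^2 * qnormsq H))
      (- b / (a^2 + b^2 + c^2 * qnormsq H)) (- c / (a^2 + b^2 + c^2 * qnormsq H))"
proof -
  note h = frame_facts[OF assms(1)]
  define F where "F = a^2 + b^2 + c^2 * qnormsq H"
  have n: "qnormsq (V I H a b c) = F" using V_norm[OF assms(1)] F_def by simp
  show ?thesis unfolding F_def[symmetric]
    by (simp add: quat_eq_iff n) (simp add: V_def h(1,2) add_divide_distrib diff_divide_distrib)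
qed

lemma V_comb:
  "V I H a b c + qof_real x * V I H a1 b1 c1 + qof_real y * V I H a2 b2 c2 =
   V I H (a + x*a1 + y*a2) (b + x*b1 + y*b2) (c + x*c1 + y*c2)"
  by (simp add: V_def quat_eq_iff algebra_simps)

lemma V_cp: "cp I t + qof_real g + H = V I H (g + cos t) (sin t) 1"
  by (simp add: V_def cp_def quat_eq_iff)

lemma mob_swap: "mobius (0,1,1,0) (Fin x) = (if x = 0 then Infty else Fin (inverse x))"
  by (simp add: mobius_def)

lemma V_zero_iff:
  assumes "frame I H" shows "V I H a b c = 0 \<longleftrightarrow> a^2 + b^2 + c^2 * qnormsq H = 0"
  using V_norm[OF assms] qnormsq_eq0 by metis

lemma core_line:
  assumes fr: "frame I H" and H0: "H = 0"
  shows "is_line {mobius (0,1,1,0) (Fin (cp I t + qof_real 1 + H)) | t. True}"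
proof -
  have nH: "qnormsq H = 0" using H0 by (simp add: qnormsq_def)
  have I0: "I \<noteq> 0" using fr unfolding frame_def uimag_def by (auto simp: qnormsq_def)
  have pt: "mobius (0,1,1,0) (Fin (cp I t + qof_real 1 + H)) =
     (if 2 + 2 * cos t = 0 then Infty else Fin (qof_real (1/2) + qof_real (- sin t / (2 + 2*cos t)) * I))" for t
  proof -
    have F: "(1 + cos t)^2 + (sin t)^2 + 1^2 * qnormsq H = 2 + 2 * cos t"
      using nH by (simp add: power2_eq_square algebra_simps)
    show ?thesis
    proof (cases "2 + 2 * cos t = 0")
      case True thus ?thesis unfolding V_cp using F V_zero_iff[OF fr] by (simp add: mob_swap)
    next
      case False
      have "inverse (V I H (1 + cos t) (sin t) 1) = V I H ((1 + cos t)/(2 + 2*cos t)) (- sin t / (2 + 2*cos t)) (- 1 / (2 + 2*cos t))"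
        using V_inv[OF fr, of "1 + cos t" "sin t" 1] F False by simp
      also have "\<dots> = qof_real (1/2) + qof_real (- sin t / (2 + 2*cos t)) * I"
      proof -
        have half: "(1 + cos t)/(2 + 2*cos t) = 1/2" using False by (simp add: field_simps)
        show ?thesis using H0 by (simp only: half) (simp add: V_def)
      qed
      finally show ?thesis unfolding V_cp using False F V_zero_iff[OF fr, of "1 + cos t" "sin t" 1] by (simp add: mob_swap)
    qed
  qed
  have eq: "{mobius (0,1,1,0) (Fin (cp I t + qof_real 1 + H)) | t. True} =
      insert Infty {Fin (qof_real (1/2) + qof_real \<tau> * I) | \<tau>. True}"
  proof (rule set_eqI, rule iffI)
    fix z assume "z \<in> {mobius (0,1,1,0) (Fin (cp I t + qof_real 1 + H)) | t. True}"
    then obtain t where z: "z = mobius (0,1,1,0) (Fin (cp I t + qof_real 1 + H))" by blast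
    show "z \<in> insert Infty {Fin (qof_real (1/2) + qof_real \<tau> * I) | \<tau>. True}"
      unfolding z pt by auto
  next
    fix z assume z: "z \<in> insert Infty {Fin (qof_real (1/2) + qof_real \<tau> * I) | \<tau>. True}"
    show "z \<in> {mobius (0,1,1,0) (Fin (cp I t + qof_real 1 + H)) | t. True}"
    proof (cases "z = Infty")
      case True
      have "mobius (0,1,1,0) (Fin (cp I pi + qof_real 1 + H)) = Infty" unfolding pt by simp
      thus ?thesis using True unfolding mem_Collect_eq by (intro exI[of _ pi]) simp
    next
      case False
      then obtain \<tau> where z: "z = Fin (qof_real (1/2) + qof_real \<tau> * I)" using z by blast
      define \<theta> where "\<theta> = arctan (- 2 * \<tau>)"
      have c0: "cos \<theta> \<noteq> 0" unfolding \<theta>_def by simp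
      have tn: "sin \<theta> / cos \<theta> = - 2 * \<tau>" using tan_arctan[of "- 2 * \<tau>"] unfolding \<theta>_def tan_def by simp
      have Fe: "2 + 2 * cos (2*\<theta>) = 4 * (cos \<theta>)^2"
      proof -
        have "(sin \<theta>)^2 = 1 - (cos \<theta>)^2" using sin_cos_squared_add[of \<theta>] by linarith
        thus ?thesis unfolding cos_double by simp
      qed
      have Fnz: "2 + 2 * cos (2*\<theta>) \<noteq> 0" using Fe c0 by simp
      have "- sin (2*\<theta>) / (2 + 2 * cos (2*\<theta>)) = - (sin \<theta> / cos \<theta>) / 2"
        unfolding Fe sin_double using c0 by (simp add: field_simps power2_eq_square)
      also have "\<dots> = \<tau>" using tn by simp
      finally have "mobius (0,1,1,0) (Fin (cp I (2*\<theta>) + qof_real 1 + H)) = z"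
        unfolding pt z using Fnz by simp
      thus ?thesis unfolding mem_Collect_eq by (intro exI[of _ "2*\<theta>"]) simp
    qed
  qed
  show ?thesis unfolding is_line_def eq using I0 by blast
qed


lemma core_circle:
  assumes fr: "frame I H" and g: "\<gamma> \<ge> 0"
    and Dpos: "(1 + qnormsq H - \<gamma>^2)^2 + 4*\<gamma>^2*qnormsq H > 0"
  shows "is_circle {mobius (0,1,1,0) (Fin (cp I t + qof_real \<gamma> + H)) | t. True}"
proof -
  define n where "n = qnormsq H"
  have n0: "n \<ge> 0" unfolding n_def by (rule qnormsq_nonneg)
  define m where "m = 1 + \<gamma>^2 + n"
  define D where "D = \<gamma>^2 + n - 1"
  define p0 where "p0 = 1 + n - \<gamma>^2"
  define \<Delta> where "\<Delta> = p0^2 + 4*\<gamma>^2*n"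
  have Dp: "\<Delta> > 0" using Dpos unfolding \<Delta>_def p0_def n_def by simp
  define s where "s = sqrt \<Delta>"
  have sp: "s > 0" unfolding s_def using Dp by simp
  have ss: "s * s = \<Delta>" unfolding s_def using Dp by simp
  have K2: "\<Delta> = m^2 - 4*\<gamma>^2" unfolding \<Delta>_def m_def p0_def by algebra
  have notdeg: "\<not> (\<gamma> = 1 \<and> n = 0)" using Dp unfolding \<Delta>_def p0_def by auto
  have mlow: "m - 2*\<gamma>*w > 0" if "w \<le> 1" for w
  proof -
    have "2*\<gamma>*w \<le> 2*\<gamma>" using that g by (simp add: mult_left_le)
    moreover have "(1-\<gamma>)^2 + n > 0"
    proof -
      have "(1-\<gamma>)^2 + n \<ge> 0" using n0 by simp
      moreover have "(1-\<gamma>)^2 + n \<noteq> 0"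
      proof
        assume "(1-\<gamma>)^2 + n = 0"
        hence "(1-\<gamma>)^2 = 0" "n = 0" using n0 by (smt (verit) zero_le_power2)+
        thus False using notdeg by simp
      qed
      ultimately show ?thesis by simp
    qed
    moreover have "m - 2*\<gamma> = (1-\<gamma>)^2 + n" unfolding m_def by (simp add: power2_eq_square algebra_simps)
    ultimately show ?thesis by linarith
  qed
  define cen where "cen = V I H (D*\<gamma>/\<Delta>) 0 (-m/\<Delta>)"
  define u where "u = V I H 0 (-1) 0"
  define v where "v = V I H (p0/s) 0 (2*\<gamma>/s)"
  have comb: "cen + qof_real \<alpha> * u + qof_real \<beta> * v = V I H (D*\<gamma>/\<Delta> + \<beta>*(p0/s)) (-\<alpha>) (-m/\<Delta> + \<beta>*(2*\<gamma>/s))" for \<alpha> \<beta>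
    unfolding cen_def u_def v_def V_comb by simp
  have uu: "qinner u u = 1" unfolding u_def V_inner[OF fr] by simp
  have vv: "qinner v v = 1"
  proof -
    have "qinner v v = (p0^2 + 4*\<gamma>^2*n) / (s*s)" unfolding v_def V_inner[OF fr] n_def[symmetric]
      using sp by (simp add: field_simps power2_eq_square)
    thus ?thesis using ss Dp unfolding \<Delta>_def by simp
  qed
  have uv: "qinner u v = 0" unfolding u_def v_def V_inner[OF fr] by simp
  have rp: "1/s > 0" using sp by simp
  have mainEq: "{mobius (0,1,1,0) (Fin (cp I t + qof_real \<gamma> + H)) | t. True} =
    {Fin (cen + qof_real \<alpha> * u + qof_real \<beta> * v) | \<alpha> \<beta>. \<alpha>^2 + \<beta>^2 = (1/s)^2}"
  proof (rule set_eqI, rule iffI)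
    fix z assume "z \<in> {mobius (0,1,1,0) (Fin (cp I t + qof_real \<gamma> + H)) | t. True}"
    then obtain t where z: "z = mobius (0,1,1,0) (Fin (cp I t + qof_real \<gamma> + H))" by blast
    define c where "c = cos t"
    define sn where "sn = sin t"
    have cs: "c^2 + sn^2 = 1" unfolding c_def sn_def by simp
    define E where "E = (\<gamma> + c)^2 + sn^2 + 1^2 * n"
    have E': "E = m + 2*\<gamma>*c" unfolding E_def m_def using cs by (simp add: power2_eq_square algebra_simps)
    have Epos: "E > 0"
    proof -
      have "c \<ge> -1" unfolding c_def by simp
      hence "E \<ge> m - 2*\<gamma>*(-c)" using E' by simp
      moreover have "m - 2*\<gamma>*(-c) > 0" by (rule mlow) (use \<open>c \<ge> -1\<close> in simp)
      ultimately show ?thesis by linarith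
    qed
    have xV: "cp I t + qof_real \<gamma> + H = V I H (\<gamma> + c) sn 1" unfolding V_cp c_def sn_def ..
    have xnz: "V I H (\<gamma> + c) sn 1 \<noteq> 0" using V_zero_iff[OF fr] Epos unfolding E_def n_def by simp
    have xinv: "inverse (V I H (\<gamma> + c) sn 1) = V I H ((\<gamma>+c)/E) (-sn/E) (-1/E)"
      using V_inv[OF fr, of "\<gamma> + c" sn 1] Epos unfolding E_def n_def by simp
    define \<alpha> where "\<alpha> = sn / E"
    define \<beta> where "\<beta> = (m*c + 2*\<gamma>) / (s*E)"
    have Enz: "E \<noteq> 0" using Epos by simp
    have snz: "s \<noteq> 0" using sp by simp
    have Dnz: "\<Delta> \<noteq> 0" using Dp by simp
    have b1: "\<beta>*(p0/s) = (m*c+2*\<gamma>)*p0/(\<Delta>*E)" unfolding \<beta>_def ss[symmetric] using Enz snz by (simp add: field_simps)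
    have b2: "\<beta>*(2*\<gamma>/s) = (m*c+2*\<gamma>)*(2*\<gamma>)/(\<Delta>*E)" unfolding \<beta>_def ss[symmetric] using Enz snz by (simp add: field_simps)
    have K1: "D*\<gamma>*E + (m*c+2*\<gamma>)*p0 = \<Delta>*(\<gamma>+c)" unfolding E' D_def m_def p0_def \<Delta>_def by algebra
    have R1: "D*\<gamma>/\<Delta> + \<beta>*(p0/s) = (\<gamma>+c)/E"
    proof -
      have "D*\<gamma>/\<Delta> + \<beta>*(p0/s) = (D*\<gamma>*E + (m*c+2*\<gamma>)*p0)/(\<Delta>*E)" unfolding b1 using Enz Dnz by (simp add: field_simps)
      also have "\<dots> = (\<gamma>+c)/E" unfolding K1 using Dnz by simp
      finally show ?thesis .
    qed
    have R2: "-m/\<Delta> + \<beta>*(2*\<gamma>/s) = -1/E"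
    proof -
      have "-m/\<Delta> + \<beta>*(2*\<gamma>/s) = (-m*E + (m*c+2*\<gamma>)*(2*\<gamma>))/(\<Delta>*E)" unfolding b2 using Enz Dnz by (simp add: field_simps)
      also have "-m*E + (m*c+2*\<gamma>)*(2*\<gamma>) = -\<Delta>" unfolding E' K2 by algebra
      finally show ?thesis using Dnz Enz by simp
    qed
    have R3: "\<alpha>^2 + \<beta>^2 = (1/s)^2"
    proof -
      have K5: "sn^2*\<Delta> + (m*c+2*\<gamma>)^2 = E^2"
      proof -
        have h: "sn^2 = 1 - c^2" using cs by simp
        have "(1 - c^2) * (m^2 - 4*\<gamma>^2) + (m*c + 2*\<gamma>)^2 = (m + 2*\<gamma>*c)^2"
          by algebra
        thus ?thesis unfolding E' K2 h .
      qed
      have "\<alpha>^2 + \<beta>^2 = (sn^2*\<Delta> + (m*c+2*\<gamma>)^2)/(\<Delta>*E^2)"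
        unfolding \<alpha>_def \<beta>_def using Enz snz Dnz ss[symmetric] by (simp add: field_simps power2_eq_square)
      also have "\<dots> = 1/\<Delta>" unfolding K5 using Enz Dnz by (simp add: power2_eq_square)
      also have "\<dots> = (1/s)^2" using ss by (simp add: power2_eq_square)
      finally show ?thesis .
    qed
    have "z = Fin (cen + qof_real \<alpha> * u + qof_real \<beta> * v)"
      unfolding z xV mob_swap comb using xnz xinv R1 R2 by (simp add: \<alpha>_def)
    thus "z \<in> {Fin (cen + qof_real \<alpha> * u + qof_real \<beta> * v) | \<alpha> \<beta>. \<alpha>^2 + \<beta>^2 = (1/s)^2}"
      using R3 by blast
  next
    fix z assume "z \<in> {Fin (cen + qof_real \<alpha> * u + qof_real \<beta> * v) | \<alpha> \<beta>. \<alpha>^2 + \<beta>^2 = (1/s)^2}"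
    then obtain \<alpha> \<beta> where z: "z = Fin (cen + qof_real \<alpha> * u + qof_real \<beta> * v)" and ab: "\<alpha>^2 + \<beta>^2 = (1/s)^2"
      by blast
    define w where "w = \<beta> * s"
    have snz: "s \<noteq> 0" using sp by simp
    have Dnz: "\<Delta> \<noteq> 0" using Dp by simp
    have hw: "\<Delta>*\<alpha>^2 + w^2 = 1"
    proof -
      have "\<Delta>*\<alpha>^2 + w^2 = (s*s)*(\<alpha>^2 + \<beta>^2)" unfolding w_def ss[symmetric] by (simp add: power2_eq_square algebra_simps)
      also have "\<dots> = 1" unfolding ab using snz by (simp add: power2_eq_square)
      finally show ?thesis .
    qed
    have bs: "\<beta>/s = w/\<Delta>" unfolding w_def ss[symmetric] using snz by (simp add: field_simps)
    define Y0 where "Y0 = D*\<gamma>/\<Delta> + \<beta>*(p0/s)"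
    define Y1 where "Y1 = -\<alpha>"
    define Y2 where "Y2 = -m/\<Delta> + \<beta>*(2*\<gamma>/s)"
    have Y0': "Y0 = (D*\<gamma> + w*p0)/\<Delta>"
    proof -
      have "\<beta>*(p0/s) = p0*(\<beta>/s)" by simp
      thus ?thesis unfolding Y0_def bs by (simp add: add_divide_distrib)
    qed
    have Y2': "Y2 = (2*\<gamma>*w - m)/\<Delta>"
    proof -
      have "\<beta>*(2*\<gamma>/s) = 2*\<gamma>*(\<beta>/s)" by simp
      thus ?thesis unfolding Y2_def bs by (simp add: diff_divide_distrib)
    qed
    define F where "F = Y0^2 + Y1^2 + Y2^2 * n"
    have w1: "w \<le> 1"
    proof -
      have "w^2 \<le> 1" using hw Dp by (smt (verit) mult_nonneg_nonneg zero_le_power2)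
      thus ?thesis using power2_le_imp_le[of w 1] by simp
    qed
    have mw: "m - 2*\<gamma>*w > 0" using mlow[OF w1] .
    have a2: "\<Delta>^2*\<alpha>^2 = \<Delta>*(1 - w^2)"
    proof -
      have "\<Delta>*\<alpha>^2 = 1 - w^2" using hw by simp
      hence A: "\<Delta>*(\<Delta>*\<alpha>^2) = \<Delta>*(1 - w^2)" by simp
      have B: "\<Delta>^2*\<alpha>^2 = \<Delta>*(\<Delta>*\<alpha>^2)" by (simp add: power2_eq_square)
      show ?thesis using B A by (rule trans)
    qed
    have KF: "F = (m - 2*\<gamma>*w)/\<Delta>"
    proof -
      have K3: "(D*\<gamma> + w*p0)^2 + \<Delta>*(1 - w^2) + n*(2*\<gamma>*w - m)^2 = \<Delta>*(m - 2*\<gamma>*w)"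
        unfolding D_def p0_def \<Delta>_def m_def by algebra
      have "F = ((D*\<gamma> + w*p0)^2 + \<Delta>^2*\<alpha>^2 + n*(2*\<gamma>*w - m)^2)/\<Delta>^2"
        unfolding F_def Y0' Y1_def Y2' using Dnz by (simp add: field_simps power2_eq_square)
      also have "\<dots> = \<Delta>*(m - 2*\<gamma>*w)/\<Delta>^2" unfolding a2 K3 ..
      also have "\<dots> = (m - 2*\<gamma>*w)/\<Delta>" using Dnz by (simp add: power2_eq_square)
      finally show ?thesis .
    qed
    have Fpos: "F > 0" unfolding KF using mw Dp by simp
    have Fnz: "F \<noteq> 0" using Fpos by simp
    have Y2F: "- Y2 / F = 1" unfolding KF Y2' using mw Dnz by (simp add: field_simps)
    have circ1: "(Y0/F - \<gamma>)^2 + (- Y1/F)^2 = 1"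
    proof -
      have e1: "Y0/F - \<gamma> = (m*w - 2*\<gamma>)/(m - 2*\<gamma>*w)"
      proof -
        have "Y0 - \<gamma>*F = (m*w - 2*\<gamma>)/\<Delta>" unfolding Y0' KF using Dnz
          by (simp add: field_simps) (simp add: D_def p0_def m_def algebra_simps power2_eq_square)
        note h = this
        have "Y0/F - \<gamma> = (Y0 - \<gamma>*F)/F" using Fnz by (simp add: field_simps)
        also have "\<dots> = ((m*w - 2*\<gamma>)/\<Delta>)/F" unfolding h ..
        also have "\<dots> = (m*w - 2*\<gamma>)/(m - 2*\<gamma>*w)" unfolding KF using Dnz mw by (simp add: field_simps)
        finally show ?thesis .
      qed
      have e2: "(- Y1/F)^2 = \<Delta>^2*\<alpha>^2/(m - 2*\<gamma>*w)^2" unfolding Y1_def KF using Dnz mw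
        by (simp add: field_simps power2_eq_square)
      have K4: "(m*w - 2*\<gamma>)^2 + \<Delta>*(1-w^2) = (m - 2*\<gamma>*w)^2" unfolding K2 by algebra
      show ?thesis unfolding e1 e2 a2 using mw
        by (simp add: power_divide add_divide_distrib[symmetric] K4)
    qed
    obtain t where t: "Y0/F - \<gamma> = cos t" "- Y1/F = sin t" using sincos_total_2pi[OF circ1] by blast
    have yV: "cen + qof_real \<alpha> * u + qof_real \<beta> * v = V I H Y0 Y1 Y2"
      unfolding comb Y0_def Y1_def Y2_def ..
    have ynz: "V I H Y0 Y1 Y2 \<noteq> 0" using V_zero_iff[OF fr] Fpos unfolding F_def n_def by simp
    have "inverse (V I H Y0 Y1 Y2) = V I H (Y0/F) (-Y1/F) (-Y2/F)"
      using V_inv[OF fr, of Y0 Y1 Y2] Fnz unfolding F_def n_def by simp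
    also have "\<dots> = cp I t + qof_real \<gamma> + H" unfolding V_cp Y2F t[symmetric] by simp
    finally have xe: "cp I t + qof_real \<gamma> + H = inverse (V I H Y0 Y1 Y2)" ..
    have "mobius (0,1,1,0) (Fin (cp I t + qof_real \<gamma> + H)) = z"
      unfolding xe mob_swap z yV using ynz by simp
    thus "z \<in> {mobius (0,1,1,0) (Fin (cp I t + qof_real \<gamma> + H)) | t. True}"
      unfolding mem_Collect_eq by (intro exI[of _ t]) simp
  qed
  show ?thesis unfolding mainEq by (rule is_circle_alt[OF rp uu vv uv refl])
qed


lemma core_gen:
  assumes fr: "frame I H" and g: "\<gamma> \<ge> 0"
  shows "is_circle {mobius (0,1,1,0) (Fin (cp I t + qof_real \<gamma> + H)) | t. True} \<or>
         is_line {mobius (0,1,1,0) (Fin (cp I t + qof_real \<gamma> + H)) | t. True}"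
proof (cases "(1 + qnormsq H - \<gamma>^2)^2 + 4*\<gamma>^2*qnormsq H > 0")
  case True thus ?thesis using core_circle[OF fr g] by blast
next
  case False
  have n0: "qnormsq H \<ge> 0" by (rule qnormsq_nonneg)
  have a: "(1 + qnormsq H - \<gamma>^2)^2 \<ge> 0" by simp
  have b: "4*\<gamma>^2*qnormsq H \<ge> 0" using n0 by simp
  have z1: "(1 + qnormsq H - \<gamma>^2)^2 = 0" and z2: "4*\<gamma>^2*qnormsq H = 0" using False a b by linarith+
  have e1: "\<gamma>^2 = 1 + qnormsq H" using z1 by simp
  have "\<gamma> \<noteq> 0" using e1 n0 by auto
  hence nH: "qnormsq H = 0" using z2 by simp
  hence H0: "H = 0" using qnormsq_eq0 by simp
  have "\<gamma>^2 = 1" using e1 nH by simp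
  hence "\<gamma> = 1" using g by (simp add: power2_eq_1_iff)
  thus ?thesis using core_line[OF fr H0] by simp
qed

lemma reparam: "{f (t + p) | t. True} = {f s | s. True}" for f :: "real \<Rightarrow> 'a" and p :: real
proof (rule set_eqI, rule iffI)
  fix z assume "z \<in> {f s | s. True}"
  then obtain s where "z = f s" by blast
  hence "z = f ((s - p) + p)" by simp
  thus "z \<in> {f (t + p) | t. True}" by blast
qed blast

lemma qinner_add: "qinner x (y + z) = qinner x y + qinner x z"
  by (simp add: qinner_def algebra_simps)
lemma qinner_scal: "qinner x (qof_real a * y) = a * qinner x y"
  by (simp add: qinner_def algebra_simps)

lemma uimag_nz: "uimag I \<Longrightarrow> I \<noteq> 0"
  unfolding uimag_def by (auto simp: qnormsq_def)

lemma inv_circ: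
  assumes I: "uimag I"
  shows "is_circle {mobius (0,1,1,0) (Fin (cp I t + G)) | t. True} \<or>
         is_line {mobius (0,1,1,0) (Fin (cp I t + G)) | t. True}"
proof -
  have I0: "qRe I = 0" and In: "qI I * qI I + qJ I * qJ I + qK I * qK I = 1"
    using I unfolding uimag_def qnormsq_def by (auto simp: power2_eq_square)
  define g0 where "g0 = qRe G"
  define g1 where "g1 = qinner G I"
  define H where "H = G - qof_real g0 - qof_real g1 * I"
  have GH: "G = qof_real g0 + qof_real g1 * I + H" unfolding H_def by simp
  have fr: "frame I H"
  proof -
    have "qRe H = 0" unfolding H_def g0_def using I0 by simp
    moreover have "qinner I H = 0"
    proof -
      have "qinner I H = qinner G I - g1 * (qI I * qI I + qJ I * qJ I + qK I * qK I)"
        unfolding H_def g0_def g1_def qinner_def using I0 by (simp add: algebra_simps)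
      thus ?thesis unfolding In g1_def by simp
    qed
    ultimately show ?thesis unfolding frame_def using I by simp
  qed
  define \<gamma> where "\<gamma> = sqrt (g0^2 + g1^2)"
  show ?thesis
  proof (cases "\<gamma> = 0")
    case True
    hence "g0 = 0" "g1 = 0" unfolding \<gamma>_def by (simp_all add: add_nonneg_eq_0_iff)
    hence "G = qof_real 0 + H" using GH by simp
    hence "cp I t + G = cp I t + qof_real 0 + H" for t by (simp add: add.assoc)
    thus ?thesis using core_gen[OF fr, of 0] by simp
  next
    case False
    have "\<gamma> \<ge> 0" unfolding \<gamma>_def by simp
    hence gp: "\<gamma> > 0" using False by simp
    have ss: "\<gamma>^2 = g0^2 + g1^2" unfolding \<gamma>_def by simp
    have "(g0/\<gamma>)^2 + (- g1/\<gamma>)^2 = (g0^2 + g1^2)/\<gamma>^2" by (simp add: power_divide add_divide_distrib)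
    moreover have "(g0^2 + g1^2)/\<gamma>^2 = 1" unfolding ss[symmetric] using gp by simp
    ultimately have "(g0/\<gamma>)^2 + (- g1/\<gamma>)^2 = 1" by (rule trans)
    then obtain p where p: "g0/\<gamma> = cos p" "- g1/\<gamma> = sin p" by (rule sincos_total_2pi)
    define e where "e = qof_real (cos p) + qof_real (sin p) * I"
    have en: "qnormsq e = 1"
    proof -
      have "qnormsq e = (cos p)^2 + (sin p)^2 + 0^2 * qnormsq 0"
        using V_norm[of I 0 "cos p" "sin p" 0] I unfolding e_def V_def frame_def
        by (simp add: qinner_def)
      thus ?thesis by simp
    qed
    have enz: "e \<noteq> 0" using en qnormsq_eq0 by force
    define H' where "H' = e * H"
    have fr': "frame I H'"
    proof -
      have h: "qRe H = 0" "qinner I H = 0" using fr unfolding frame_def by auto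
      have r1: "qRe (I * H) = 0" using h I0 unfolding qinner_def by simp
      have r2: "qinner I (I * H) = 0"
      proof -
        have "qinner (I * 1) (I * H) = qnormsq I * qinner 1 H" by (rule qinner_left)
        thus ?thesis using h by (simp add: qinner_def)
      qed
      have "qRe H' = 0" unfolding H'_def e_def using h r1 by (simp add: distrib_right qr_mult2 qr_right)
      moreover have "qinner I H' = 0" unfolding H'_def e_def distrib_right qr_right qinner_add qinner_scal
        using h r2 by simp
      ultimately show ?thesis using I unfolding frame_def by simp
    qed
    have eg: "e * (qof_real g0 + qof_real g1 * I) = qof_real \<gamma>"
    proof -
      have c: "cos p = g0/\<gamma>" and s: "sin p = - g1/\<gamma>" using p by simp_all
      have "e * (qof_real g0 + qof_real g1 * I) = qof_real (cos p * g0) + qof_real (cos p * g1) * I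
          + qof_real (sin p * g0) * I + qof_real (sin p * g1) * (I * I)"
        unfolding e_def by (simp add: distrib_left distrib_right qr_mult1 qr_mult2 qr_mult3 qr_mult4 add.assoc)
      also have "\<dots> = qof_real (cos p * g0 - sin p * g1) + qof_real (cos p * g1 + sin p * g0) * I"
        unfolding uimag_sq[OF I] by (simp add: quat_eq_iff algebra_simps)
      also have "cos p * g0 - sin p * g1 = \<gamma>"
      proof -
        have "cos p * g0 - sin p * g1 = (g0^2 + g1^2)/\<gamma>" unfolding c s using gp by (simp add: field_simps power2_eq_square)
        also have "\<dots> = \<gamma>" unfolding ss[symmetric] using gp by (simp add: power2_eq_square)
        finally show ?thesis .
      qed
      also have "cos p * g1 + sin p * g0 = 0" unfolding c s by (simp add: field_simps)
      finally show ?thesis by simp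
    qed
    have ex: "e * (cp I t + G) = cp I (t + p) + qof_real \<gamma> + H'" for t
    proof -
      have "e * (cp I t + G) = e * cp I t + e * (qof_real g0 + qof_real g1 * I) + e * H"
        unfolding GH by (simp add: distrib_left add.assoc)
      moreover have er: "e * cp I t = cp I (t+p)" unfolding e_def by (rule cp_rot[OF I])
      ultimately show ?thesis unfolding eg er H'_def by simp
    qed
    have ptw: "mobius (0,1,1,0) (Fin (cp I t + G)) = affh 1 e 0 (mobius (0,1,1,0) (Fin (cp I (t + p) + qof_real \<gamma> + H')))" for t
    proof -
      have xe: "cp I t + G = inverse e * (cp I (t + p) + qof_real \<gamma> + H')"
        unfolding ex[symmetric] using enz by (simp add: mult.assoc[symmetric])
      show ?thesis unfolding xe mob_swap using enz
        by (simp add: affh_def nonzero_inverse_mult_distrib)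
    qed
    have eqS: "{mobius (0,1,1,0) (Fin (cp I t + G)) | t. True} =
       affh 1 e 0 ` {mobius (0,1,1,0) (Fin (cp I s + qof_real \<gamma> + H')) | s. True}"
      unfolding image_setbuilder ptw
      using reparam[of "\<lambda>s. affh 1 e 0 (mobius (0,1,1,0) (Fin (cp I s + qof_real \<gamma> + H')))" p] by simp
    show ?thesis unfolding eqS
      by (rule gen_affine[OF core_gen[OF fr'] _ enz]) (use gp in simp_all)
  qed
qed

lemma mobius_circ:
  assumes M: "M \<in> GL2H" and I: "uimag I"
  shows "is_circle (mobius M ` circ I) \<or> is_line (mobius M ` circ I)"
proof -
  obtain a b c d where Md: "M = (a,b,c,d)" by (cases M) auto
  have M': "(a,b,c,d) \<in> GL2H" using M Md by simp
  show ?thesis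
  proof (cases "c = 0")
    case True
    have ad: "a \<noteq> 0" "d \<noteq> 0" using GL2H_props(1)[OF M' True] by auto
    have "mobius M ` circ I = affh a (inverse d) (b * inverse d) ` circ I"
      unfolding Md True using mobius_upper[OF ad(2)] by simp
    thus ?thesis using circle_affine[OF circ_circle[OF I] ad(1)] ad(2) by simp
  next
    case False
    define k where "k = b - a * inverse c * d"
    have knz: "k \<noteq> 0" unfolding k_def using GL2H_props(2)[OF M' False] .
    define G where "G = inverse c * d"
    have pt: "mobius M (Fin z) = affh k (inverse c) (a * inverse c) (mobius (0,1,1,0) (Fin (z + G)))" for z
    proof -
      have cz: "c * z + d = c * (z + G)" unfolding G_def using False by (simp add: distrib_left mult.assoc[symmetric])
      show ?thesis
      proof (cases "z + G = 0")
        case True thus ?thesis using cz by (simp add: Md mobius_def mob_swap affh_def mult.assoc)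
      next
        case False2: False
        have num: "a * z + b = a * inverse c * (c * z + d) + k"
        proof -
          have aic: "a * inverse c * c = a" using False by (simp add: mult.assoc)
          show ?thesis unfolding k_def by (simp add: distrib_left mult.assoc[symmetric] aic)
        qed
        have "(a * z + b) * inverse (c * z + d) = a * inverse c + k * inverse (c * z + d)"
        proof -
          have cnz: "c * z + d \<noteq> 0" using cz False False2 by simp
          have "(a * z + b) * inverse (c * z + d) = (a * inverse c * (c*z+d) + k) * inverse (c*z+d)" unfolding num ..
          also have "\<dots> = a * inverse c * (c*z+d) * inverse (c*z+d) + k * inverse (c*z+d)"
            by (rule distrib_right)
          also have "\<dots> = a * inverse c * ((c*z+d) * inverse (c*z+d)) + k * inverse (c*z+d)"
            by (simp only: mult.assoc)
          also have "\<dots> = a * inverse c + k * inverse (c*z+d)" using cnz by simp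
          finally show ?thesis .
        qed
        also have "\<dots> = k * inverse (z + G) * inverse c + a * inverse c"
          unfolding cz using False False2 by (simp add: nonzero_inverse_mult_distrib mult.assoc)
        finally show ?thesis using False False2 cz by (simp add: Md mobius_def mob_swap affh_def)
      qed
    qed
    have "mobius M ` circ I = affh k (inverse c) (a * inverse c) ` {mobius (0,1,1,0) (Fin (cp I t + G)) | t. True}"
      unfolding circ_def image_setbuilder pt ..
    thus ?thesis using gen_affine[OF inv_circ[OF I] knz] False by simp
  qed
qed


lemma span_comm: "(qof_real x + qof_real y * I) * (qof_real x' + qof_real y' * I) =
  (qof_real x' + qof_real y' * I) * (qof_real x + qof_real y * I)"
  by (simp add: quat_eq_iff algebra_simps)

lemma anticomm:
  assumes "qRe X = 0" "qRe I = 0" "qinner X I = 0"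
  shows "X * I = - (I * X)"
proof -
  have h: "qI X * qI I + qJ X * qJ I + qK X * qK I = 0" using assms unfolding qinner_def by simp
  show ?thesis using assms(1,2) h by (simp add: quat_eq_iff algebra_simps)
qed

lemma conj_formula:
  assumes I: "uimag I" and X: "qRe X = 0" "qinner X I = 0" and a: "a = qof_real x + qof_real y * I" "a \<noteq> 0"
    and dl: "\<delta> = qof_real d0 + qof_real d1 * I"
  shows "a * (\<delta> + X) * inverse a = \<delta> + (qof_real (1 / (x^2 + y^2)) * (a * a)) * X"
proof -
  have fr: "frame I 0" using I unfolding frame_def by (simp add: qinner_def)
  have aV: "a = V I 0 x y 0" unfolding a V_def by simp
  define N where "N = x^2 + y^2"
  have Nn: "qnormsq a = N" unfolding aV V_norm[OF fr] N_def by simp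
  have Npos: "N > 0" using Nn qnormsq_pos a(2) by metis
  have F: "x^2 + y^2 + 0^2 * qnormsq 0 \<noteq> 0"
  proof -
    have "0^2 * qnormsq 0 = (0::real)" by simp
    thus ?thesis using Npos N_def by linarith
  qed
  have ainv: "inverse a = qof_real (x/N) + qof_real (- y/N) * I"
    unfolding aV V_inv[OF fr F] by (simp add: V_def N_def)
  have d1: "a * \<delta> * inverse a = \<delta>"
  proof -
    have "a * \<delta> = \<delta> * a" unfolding a(1) dl by (rule span_comm)
    thus ?thesis using a(2) by (simp add: mult.assoc)
  qed
  have I0: "qRe I = 0" using I unfolding uimag_def by simp
  have XI: "X * I = - (I * X)" by (rule anticomm[OF X(1) I0 X(2)])
  have "X * inverse a = qof_real (x/N) * X + qof_real (-y/N) * (X * I)"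
    unfolding ainv by (simp add: quat_eq_iff algebra_simps)
  also have "\<dots> = qof_real (1/N) * (a * X)"
    unfolding XI a(1) by (simp add: quat_eq_iff algebra_simps)
  finally have Xa: "X * inverse a = qof_real (1/N) * (a * X)" .
  have d2: "a * X * inverse a = qof_real (1/N) * (a * a) * X"
    by (simp add: mult.assoc Xa qr_left qr_right)
  have "a * (\<delta> + X) * inverse a = a * \<delta> * inverse a + a * X * inverse a" by (simp add: algebra_simps)
  thus ?thesis unfolding d1 d2 N_def by simp
qed

lemma orbit_eq:
  assumes I: "uimag I" and X: "qRe X = 0" "qinner X I = 0"
    and dl: "\<delta> = qof_real d0 + qof_real d1 * I"
  shows "{a * (\<delta> + X) * inverse a | a. a \<noteq> 0 \<and> a * I = I * a} = {\<delta> + cp I \<theta> * X | \<theta>. True}"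
proof (rule set_eqI, rule iffI)
  fix z assume "z \<in> {a * (\<delta> + X) * inverse a | a. a \<noteq> 0 \<and> a * I = I * a}"
  then obtain a where z: "z = a * (\<delta> + X) * inverse a" and a: "a \<noteq> 0" "a * I = I * a" by blast
  have "qI I \<noteq> 0 \<or> qJ I \<noteq> 0 \<or> qK I \<noteq> 0" using I unfolding uimag_def qnormsq_def by auto
  then obtain x y where ax: "a = qof_real x + qof_real y * I" using centralizer[OF a(2)] by blast
  have fr: "frame I 0" using I unfolding frame_def by (simp add: qinner_def)
  define N where "N = x^2 + y^2"
  have "qnormsq a = N" unfolding ax N_def using V_norm[OF fr, of x y 0] by (simp add: V_def)
  hence Npos: "N > 0" using qnormsq_pos a(1) by metis
  have aa: "qof_real (1/N) * (a * a) = qof_real ((x^2 - y^2)/N) + qof_real (2*x*y/N) * I"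
    unfolding ax by (simp add: distrib_left distrib_right qr_mult1 qr_mult2 qr_mult3 qr_mult4 uimag_sq[OF I])
      (simp add: quat_eq_iff power2_eq_square diff_divide_distrib)
  have "((x^2 - y^2)/N)^2 + (2*x*y/N)^2 = ((x^2 - y^2)^2 + (2*x*y)^2)/N^2"
    by (simp add: power_divide add_divide_distrib)
  also have "(x^2 - y^2)^2 + (2*x*y)^2 = N^2" unfolding N_def by algebra
  finally have "((x^2 - y^2)/N)^2 + (2*x*y/N)^2 = 1" using Npos by simp
  then obtain \<theta> where th: "(x^2 - y^2)/N = cos \<theta>" "2*x*y/N = sin \<theta>" by (rule sincos_total_2pi)
  have "z = \<delta> + cp I \<theta> * X"
    unfolding z conj_formula[OF I X ax a(1) dl] N_def[symmetric] aa th cp_def ..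
  thus "z \<in> {\<delta> + cp I \<theta> * X | \<theta>. True}" by blast
next
  fix z assume "z \<in> {\<delta> + cp I \<theta> * X | \<theta>. True}"
  then obtain \<theta> where z: "z = \<delta> + cp I \<theta> * X" by blast
  define a where "a = cp I (\<theta>/2)"
  have ax: "a = qof_real (cos (\<theta>/2)) + qof_real (sin (\<theta>/2)) * I" unfolding a_def cp_def ..
  have fr: "frame I 0" using I unfolding frame_def by (simp add: qinner_def)
  have "qnormsq a = (cos (\<theta>/2))^2 + (sin (\<theta>/2))^2" unfolding ax using V_norm[OF fr, of "cos (\<theta>/2)" "sin (\<theta>/2)" 0] by (simp add: V_def)
  hence an: "qnormsq a = 1" by simp
  hence anz: "a \<noteq> 0" using qnormsq_eq0 by force
  have aI: "a * I = I * a" unfolding ax using span_comm[of "cos (\<theta>/2)" "sin (\<theta>/2)" I 0 1] by simp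
  have aa: "a * a = cp I \<theta>" using cp_rot[OF I, of "\<theta>/2" "\<theta>/2"] unfolding a_def[symmetric] ax[symmetric] by simp
  have "a * (\<delta> + X) * inverse a = z"
    unfolding conj_formula[OF I X ax anz dl] aa z using sin_cos_squared_add2[of "\<theta>/2"] by simp
  thus "z \<in> {a * (\<delta> + X) * inverse a | a. a \<noteq> 0 \<and> a * I = I * a}" using anz aI by blast
qed


lemma ball14: "(\<forall>n\<in>{1..4::nat}. P n) \<longleftrightarrow> P 1 \<and> P 2 \<and> P 3 \<and> P 4"
proof -
  have "{1..4::nat} = {1,2,3,4}" by auto
  thus ?thesis by simp
qed

lemma inv_mult_nz: "(b::quat) \<noteq> 0 \<Longrightarrow> a \<noteq> 0 \<Longrightarrow> inverse (b * a) = inverse a * inverse b"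
  by (simp add: nonzero_inverse_mult_distrib)

theorem mainTheorem6:
  fixes q :: "nat \<Rightarrow> hquat" and q' :: "nat \<Rightarrow> hquat"
  assumes "inj_on q {1..5}"
    and "inj_on q' {1..4}"
    and "RH (q 1) (q 2) (q 3) (q 4) = RH (q' 1) (q' 2) (q' 3) (q' 4)"
    and "qIm (crossratio (q 1) (q 2) (q 3) (q 4)) \<noteq> 0"
  defines "C \<equiv> {mobius \<gamma> (q 5) | \<gamma>. \<gamma> \<in> GL2H \<and> (\<forall>n\<in>{1..4}. mobius \<gamma> (q n) = q' n)}"
  shows "(is_circle C \<or> is_line C \<or> (\<exists>p. C = {p})) \<and>
         ((\<exists>p. C = {p}) \<longleftrightarrow>
            crossratio (q 1) (q 2) (q 3) (q 4) * crossratio (q 1) (q 2) (q 3) (q 5) =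
            crossratio (q 1) (q 2) (q 3) (q 5) * crossratio (q 1) (q 2) (q 3) (q 4))"
proof -
  have dq: "q i \<noteq> q j" if "i \<in> {1..5}" "j \<in> {1..5}" "i \<noteq> j" for i j
    using inj_onD[OF assms(1)] that by blast
  have dq': "q' i \<noteq> q' j" if "i \<in> {1..4}" "j \<in> {1..4}" "i \<noteq> j" for i j
    using inj_onD[OF assms(2)] that by blast
  obtain N where N: "N \<in> GL2H" "mobius N (q 1) = Fin 0" "mobius N (q 2) = Fin 1" "mobius N (q 3) = Infty"
    and Nz: "\<forall>z. z \<noteq> q 1 \<and> z \<noteq> q 2 \<and> z \<noteq> q 3 \<longrightarrow> mobius N z = Fin (crossratio (q 1) (q 2) (q 3) z)"
    using normalize[OF dq[of 1 2] dq[of 1 3] dq[of 2 3]] by auto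
  obtain N' where N': "N' \<in> GL2H" "mobius N' (q' 1) = Fin 0" "mobius N' (q' 2) = Fin 1" "mobius N' (q' 3) = Infty"
    and Nz': "\<forall>z. z \<noteq> q' 1 \<and> z \<noteq> q' 2 \<and> z \<noteq> q' 3 \<longrightarrow> mobius N' z = Fin (crossratio (q' 1) (q' 2) (q' 3) z)"
    using normalize[OF dq'[of 1 2] dq'[of 1 3] dq'[of 2 3]] by auto
  define P where "P = crossratio (q 1) (q 2) (q 3) (q 4)"
  define W where "W = crossratio (q 1) (q 2) (q 3) (q 5)"
  define P' where "P' = crossratio (q' 1) (q' 2) (q' 3) (q' 4)"
  have NP: "mobius N (q 4) = Fin P" using Nz dq[of 4 1] dq[of 4 2] dq[of 4 3] unfolding P_def by auto
  have NW: "mobius N (q 5) = Fin W" using Nz dq[of 5 1] dq[of 5 2] dq[of 5 3] unfolding W_def by auto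
  have NP': "mobius N' (q' 4) = Fin P'" using Nz' dq'[of 4 1] dq'[of 4 2] dq'[of 4 3] unfolding P'_def by auto
  obtain Ni where Ni: "Ni \<in> GL2H" "\<And>z. mobius Ni (mobius N z) = z" "\<And>z. mobius N (mobius Ni z) = z"
    using mobius_inv[OF N(1)] by blast
  obtain N'i where N'i: "N'i \<in> GL2H" "\<And>z. mobius N'i (mobius N' z) = z" "\<And>z. mobius N' (mobius N'i z) = z"
    using mobius_inv[OF N'(1)] by blast
  have rh: "qabs P = qabs P'" "qRe P = qRe P'" using assms(3) unfolding RH_def Let_def P_def P'_def by simp_all
  have nP: "qnormsq P = qnormsq P'" using rh(1) qnormsq_nonneg[of P] qnormsq_nonneg[of P'] unfolding qabs_def by simp
  have imP: "qI P \<noteq> 0 \<or> qJ P \<noteq> 0 \<or> qK P \<noteq> 0" using assms(4) qIm_nz unfolding P_def by blast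
  obtain b where b: "b \<noteq> 0" "b * P = P' * b" using similar_exists[OF rh(2) nP imP] by blast
  have P'eq: "P' = b * P * inverse b" using b by (simp add: mult.assoc)
  define \<Phi> where "\<Phi> = qmat_mult N'i (b,0,0,b)"
  have \<Phi>G: "\<Phi> \<in> GL2H" unfolding \<Phi>_def by (rule GL2H_mult[OF N'i(1) scal_GL2H[OF b(1)]])
  have \<Phi>pt: "mobius \<Phi> (Fin x) = mobius N'i (Fin (b * x * inverse b))" for x
    unfolding \<Phi>_def mobius_comp[OF scal_GL2H[OF b(1)]] scal_mobius(1)[OF b(1)] scal_mobius(2) ..
  define Oset where "Oset = {a * W * inverse a | a. a \<noteq> 0 \<and> a * P = P * a}"
  have Ceq: "C = (\<lambda>x. mobius \<Phi> (Fin x)) ` Oset"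
  proof (rule set_eqI, rule iffI)
    fix z assume "z \<in> C"
    then obtain \<gamma> where z: "z = mobius \<gamma> (q 5)" and \<gamma>G: "\<gamma> \<in> GL2H"
      and hq: "mobius \<gamma> (q 1) = q' 1" "mobius \<gamma> (q 2) = q' 2" "mobius \<gamma> (q 3) = q' 3" "mobius \<gamma> (q 4) = q' 4"
      unfolding C_def ball14 by blast
    define \<sigma> where "\<sigma> = qmat_mult N' (qmat_mult \<gamma> Ni)"
    have \<sigma>G: "\<sigma> \<in> GL2H" unfolding \<sigma>_def by (rule GL2H_mult[OF N'(1) GL2H_mult[OF \<gamma>G Ni(1)]])
    have \<sigma>pt: "mobius \<sigma> w = mobius N' (mobius \<gamma> (mobius Ni w))" for w
      unfolding \<sigma>_def mobius_comp[OF GL2H_mult[OF \<gamma>G Ni(1)]] mobius_comp[OF Ni(1)] ..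
    have s0: "mobius \<sigma> (Fin 0) = Fin 0" unfolding \<sigma>pt N(2)[symmetric] Ni(2) hq N'(2) ..
    have s1: "mobius \<sigma> (Fin 1) = Fin 1" unfolding \<sigma>pt N(3)[symmetric] Ni(2) hq N'(3) ..
    have s2: "mobius \<sigma> Infty = Infty" unfolding \<sigma>pt N(4)[symmetric] Ni(2) hq N'(4) ..
    obtain a0 where a0: "a0 \<noteq> 0" "\<sigma> = (a0,0,0,a0)" using stab_form[OF \<sigma>G s0 s1 s2] by blast
    have "mobius \<sigma> (Fin P) = Fin P'" unfolding \<sigma>pt NP[symmetric] Ni(2) hq NP' ..
    hence "a0 * P * inverse a0 = P'" using a0 scal_mobius by simp
    hence a0P: "a0 * P = P' * a0" using a0(1) by (metis mult.assoc left_inverse mult_1_right)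
    define a where "a = inverse b * a0"
    have anz: "a \<noteq> 0" unfolding a_def using a0(1) b(1) by simp
    have ba: "b * a = a0" unfolding a_def using b(1) by (simp add: inv_prod_cancel)
    have aP: "a * P = P * a"
    proof -
      have "a * P = inverse b * (P' * a0)" unfolding a_def a0P[symmetric] by (simp add: mult.assoc)
      also have "\<dots> = P * a" unfolding P'eq a_def using b(1) by (simp add: mult.assoc inv_prod_cancel)
      finally show ?thesis .
    qed
    have "z = mobius N'i (mobius N' (mobius \<gamma> (mobius Ni (mobius N (q 5)))))" unfolding z Ni(2) N'i(2) ..
    also have "\<dots> = mobius N'i (mobius \<sigma> (Fin W))" unfolding \<sigma>pt NW ..
    also have "\<dots> = mobius N'i (Fin (a0 * W * inverse a0))" using a0 scal_mobius by simp
    also have "a0 * W * inverse a0 = b * (a * W * inverse a) * inverse b"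
      unfolding ba[symmetric] using anz b(1) by (simp add: inv_mult_nz mult.assoc)
    also have "mobius N'i (Fin \<dots>) = mobius \<Phi> (Fin (a * W * inverse a))" unfolding \<Phi>pt ..
    finally show "z \<in> (\<lambda>x. mobius \<Phi> (Fin x)) ` Oset" unfolding Oset_def using anz aP by blast
  next
    fix z assume "z \<in> (\<lambda>x. mobius \<Phi> (Fin x)) ` Oset"
    then obtain a where z: "z = mobius \<Phi> (Fin (a * W * inverse a))" and anz: "a \<noteq> 0" and aP: "a * P = P * a"
      unfolding Oset_def by blast
    define a0 where "a0 = b * a"
    have a0nz: "a0 \<noteq> 0" unfolding a0_def using anz b(1) by simp
    define \<gamma> where "\<gamma> = qmat_mult N'i (qmat_mult (a0,0,0,a0) N)"
    have \<gamma>G: "\<gamma> \<in> GL2H" unfolding \<gamma>_def by (rule GL2H_mult[OF N'i(1) GL2H_mult[OF scal_GL2H[OF a0nz] N(1)]])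
    have \<gamma>pt: "mobius \<gamma> w = mobius N'i (mobius (a0,0,0,a0) (mobius N w))" for w
      unfolding \<gamma>_def mobius_comp[OF GL2H_mult[OF scal_GL2H[OF a0nz] N(1)]] mobius_comp[OF N(1)] ..
    have g1: "mobius \<gamma> (q 1) = q' 1" unfolding \<gamma>pt N(2) scal_mobius(1)[OF a0nz] using a0nz N'i(2)[of "q' 1"] N'(2) by simp
    have g2: "mobius \<gamma> (q 2) = q' 2" unfolding \<gamma>pt N(3) scal_mobius(1)[OF a0nz] scal_mobius(2) using a0nz N'i(2)[of "q' 2"] N'(3) by simp
    have g3: "mobius \<gamma> (q 3) = q' 3" unfolding \<gamma>pt N(4) scal_mobius(2) using N'i(2)[of "q' 3"] N'(4) by simp
    have a0P: "a0 * P * inverse a0 = P'"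
    proof -
      have "a0 * P * inverse a0 = b * (a * P) * (inverse a * inverse b)" unfolding a0_def using anz b(1) by (simp add: inv_mult_nz mult.assoc)
      also have "\<dots> = b * P * inverse b" unfolding aP using anz by (simp add: mult.assoc inv_prod_cancel)
      finally show ?thesis using P'eq by simp
    qed
    have g4: "mobius \<gamma> (q 4) = q' 4" unfolding \<gamma>pt NP scal_mobius(1)[OF a0nz] scal_mobius(2) a0P NP'[symmetric] N'i(2) ..
    have "mobius \<gamma> (q 5) = mobius N'i (Fin (a0 * W * inverse a0))" unfolding \<gamma>pt NW scal_mobius(1)[OF a0nz] scal_mobius(2) ..
    also have "a0 * W * inverse a0 = b * (a * W * inverse a) * inverse b"
      unfolding a0_def using anz b(1) by (simp add: inv_mult_nz mult.assoc)
    also have "mobius N'i (Fin \<dots>) = z" unfolding z \<Phi>pt ..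
    finally show "z \<in> C" unfolding C_def ball14 using \<gamma>G g1 g2 g3 g4 by blast
  qed
  have injF: "mobius \<Phi> (Fin x) = mobius \<Phi> (Fin y) \<Longrightarrow> x = y" for x y using mobius_inj[OF \<Phi>G] by blast
  have WO: "W \<in> Oset" unfolding Oset_def by (rule CollectI, rule exI[of _ 1]) simp
  have Pnz: "P \<noteq> 0" using imP by auto
  have PO: "P * W * inverse P \<in> Oset" unfolding Oset_def using Pnz by blast
  show ?thesis
  proof (cases "P * W = W * P")
    case True
    have "Oset = {W}"
    proof (rule set_eqI, rule iffI)
      fix z assume "z \<in> Oset"
      then obtain a where z: "z = a * W * inverse a" and anz: "a \<noteq> 0" and aP: "a * P = P * a" unfolding Oset_def by blast
      obtain x y where ax: "a = qof_real x + qof_real y * P" using centralizer[OF aP imP] by blast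
      have e1: "a * W = qof_real x * W + qof_real y * (P * W)" unfolding ax by (simp add: distrib_right mult.assoc)
      have e2: "W * a = qof_real x * W + qof_real y * (W * P)" unfolding ax
        by (simp only: distrib_left qof_real_comm[of x W] qr_left[of W y P])
      have "a * W = W * a" unfolding e1 e2 True ..
      thus "z \<in> {W}" unfolding z using anz by (simp add: mult.assoc)
    qed (use WO in simp)
    hence "C = {mobius \<Phi> (Fin W)}" unfolding Ceq by simp
    thus ?thesis using True unfolding P_def W_def by blast
  next
    case False
    have notsing: "\<not> (\<exists>p. C = {p})"
    proof
      assume "\<exists>p. C = {p}"
      then obtain p where Cp: "C = {p}" by blast
      have "mobius \<Phi> (Fin W) \<in> C" "mobius \<Phi> (Fin (P * W * inverse P)) \<in> C" unfolding Ceq using WO PO by blast+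
      hence "P * W * inverse P = W" using Cp injF by (metis singletonD)
      hence "P * W = W * P" using Pnz by (metis mult.assoc left_inverse mult_1_right)
      thus False using False by simp
    qed
    define r where "r = sqrt (qI P ^ 2 + qJ P ^ 2 + qK P ^ 2)"
    have r2: "r^2 = qI P ^ 2 + qJ P ^ 2 + qK P ^ 2" unfolding r_def by simp
    have rpos: "r > 0" unfolding r_def using imP by (auto simp: add_pos_nonneg add_nonneg_pos)
    define I where "I = Quat 0 (qI P / r) (qJ P / r) (qK P / r)"
    have uI: "uimag I"
    proof -
      have "qnormsq I = (qI P ^ 2 + qJ P ^ 2 + qK P ^ 2) / r^2" unfolding I_def qnormsq_def
        by (simp add: power_divide add_divide_distrib)
      thus ?thesis unfolding uimag_def r2[symmetric] using rpos by (simp add: I_def)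
    qed
    define p0 where "p0 = qRe P"
    have PI: "P = qof_real p0 + qof_real r * I" unfolding I_def p0_def using rpos by (simp add: quat_eq_iff)
    have comm_iff: "a * P = P * a \<longleftrightarrow> a * I = I * a" for a
    proof -
      have e1: "a * P = qof_real p0 * a + qof_real r * (a * I)"
        unfolding PI by (simp only: distrib_left qof_real_comm[of p0 a] qr_left[of a r I])
      have e2: "P * a = qof_real p0 * a + qof_real r * (I * a)" unfolding PI
        by (simp only: distrib_right qr_right)
      have "a * P = P * a \<longleftrightarrow> qof_real r * (a * I) = qof_real r * (I * a)" unfolding e1 e2 by simp
      also have "\<dots> \<longleftrightarrow> a * I = I * a"
      proof
        assume h: "qof_real r * (a * I) = qof_real r * (I * a)"
        have "qof_real (1/r) * (qof_real r * (a * I)) = qof_real (1/r) * (qof_real r * (I * a))" using h by simp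
        thus "a * I = I * a" using rpos by (simp add: qr_mult2)
      qed simp
      finally show ?thesis .
    qed
    define \<delta> where "\<delta> = qof_real (qRe W) + qof_real (qinner W I) * I"
    define X where "X = W - \<delta>"
    have I0: "qRe I = 0" and In: "qI I * qI I + qJ I * qJ I + qK I * qK I = 1"
      using uI unfolding uimag_def qnormsq_def by (auto simp: power2_eq_square)
    have XRe: "qRe X = 0" unfolding X_def \<delta>_def using I0 by simp
    have XI: "qinner X I = 0"
    proof -
      have "qinner X I = qinner W I - qinner W I * (qI I * qI I + qJ I * qJ I + qK I * qK I)"
        unfolding X_def \<delta>_def qinner_def using I0 by (simp add: algebra_simps)
      thus ?thesis unfolding In by simp
    qed
    have Xnz: "X \<noteq> 0"
    proof
      assume "X = 0"
      hence Wd: "W = \<delta>" unfolding X_def by simp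
      obtain c0 c1 where Wc: "W = qof_real c0 + qof_real c1 * I" using Wd unfolding \<delta>_def by blast
      have "P * W = W * P" unfolding Wc PI by (rule span_comm)
      thus False using False by simp
    qed
    have Oeq: "Oset = {\<delta> + cp I \<theta> * X | \<theta>. True}"
    proof -
      have "Oset = {a * (\<delta> + X) * inverse a | a. a \<noteq> 0 \<and> a * I = I * a}"
        unfolding Oset_def X_def comm_iff by simp
      also have "\<dots> = {\<delta> + cp I \<theta> * X | \<theta>. True}" by (rule orbit_eq[OF uI XRe XI \<delta>_def])
      finally show ?thesis .
    qed
    define Aff where "Aff = (1::quat, \<delta> * inverse X, 0::quat, inverse X)"
    have AffG: "Aff \<in> GL2H" unfolding Aff_def by (rule GL2H_upper) (use Xnz in simp_all)
    have Affpt: "mobius Aff (Fin (cp I \<theta>)) = Fin (\<delta> + cp I \<theta> * X)" for \<theta>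
      unfolding Aff_def using Xnz by (simp add: mobius_upper affh_def mult.assoc add.commute)
    have "C = mobius \<Phi> ` (mobius Aff ` circ I)"
      unfolding Ceq Oeq circ_def image_setbuilder Affpt by (simp add: image_setbuilder)
    also have "\<dots> = mobius (qmat_mult \<Phi> Aff) ` circ I" unfolding image_comp mobius_comp[OF AffG] comp_def ..
    finally have "is_circle C \<or> is_line C" using mobius_circ[OF GL2H_mult[OF \<Phi>G AffG] uI] by simp
    thus ?thesis using notsing False unfolding P_def W_def by blast
  qed
qed


end
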